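(* Let $[X,\mathcal B,m^i,\nu_i]$ ($i=1,2$) be reversible random walk spaces on the same measurable space with $\nu_2\ll\nu_1$, $\mu=\frac{d\nu_2}{d\nu_1}\in L^\infty(X,\nu_1)$, $\mu>0$ $\nu_1$-a.e., and $\nu_1(X)<\infty$. Assume $\mathcal F_{1,m^1}$ satisfies a $1$-Poincaré inequality with constant $\lambda_1(\mathcal F_{1,m^1})>0$. For $u_0\in L^2(X,\nu_1)$, let $u$ be the strong solution of $u_t-\Delta_1^{m^1}u-\mu\Delta_1^{m^2}u\ni0$, $u(0)=u_0$. Then $$\|u(t)-\overline{u_0}\|_{L^1(X,\nu_1)}\le\frac{1}{2\lambda_1(\mathcal F_{1,m^1})}\,\frac{\|u_0\|^2_{L^2(X,\nu_1)}}{t}\qquad\forall t>0.$$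
   Context: Random walk space $[X,\mathcal B,m,\nu]$: measurable space with countably generated $\sigma$-algebra, probability measures $m_x$ depending measurably on $x$, $\sigma$-finite invariant measure $\nu$ ($\nu(A)=\int m_x(A)\,d\nu(x)$), reversible if $dm_x(y)d\nu(x)=dm_y(x)d\nu(y)$. $\nabla u(x,y)=u(y)-u(x)$. $\mathcal F_{1,m}(u)=\frac12\int_{X\times X}|\nabla u|\,dm_x(y)d\nu(x)$ ($+\infty$ if infinite); $(u,v)\in\Delta_1^m$ iff $(u,-v)\in\partial_{L^2(X,\nu)}\mathcal F_{1,m}(u)$. $\overline{u}=\frac1{\nu_1(X)}\int_X u\,d\nu_1$. $r$-Poincaré inequality: $\lambda_r(\mathcal F_{1,m^1})\|u-\overline u\|_{L^r(X,\nu_1)}\le\mathcal F_{1,m^1}(u)$ for all $u\in L^r(X,\nu_1)$, some $\lambda_r>0$. The operator $A=-\Delta_1^{m^1}-\mu\Delta_1^{m^2}$ on $H=L^2(X,\nu_1)$: $(u,v)\in A$ iff $u,v\in H$, $v=v_1-\mu w$ with $(u,-v_1)\in\Delta_1^{m^1}$ (w.r.t. $\nu_1$) and $(u,w)\in\Delta_1^{m^2}$ (w.r.t. $\nu_2$). Strong solution: $u\in C([0,\infty);H)\cap W^{1,2}_{\rm loc}(0,\infty;H)$, $u(0)=u_0$, $-u_t(t)\in A(u(t))$ for a.e. $t$. *)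

theory Defs
  imports "HOL-Probability.Probability"
begin

text \<open>A random walk space [X,B,m,nu]: the measurable space M (with countably generated
sigma-algebra), a measurable family of probability measures m x on M (a Markov kernel,
i.e. m is measurable into the Giry monad prob_algebra M), and a sigma-finite invariant
measure nu on M.\<close>
definition rw_space :: "'a measure \<Rightarrow> ('a \<Rightarrow> 'a measure) \<Rightarrow> 'a measure \<Rightarrow> bool" where
  "rw_space M m \<nu> \<longleftrightarrow>
     (\<exists>G. countable G \<and> sets M = sigma_sets (space M) G) \<and>
     m \<in> M \<rightarrow>\<^sub>M prob_algebra M \<and>
     sets \<nu> = sets M \<and> sigma_finite_measure \<nu> \<and>
     (\<forall>A\<in>sets M. emeasure \<nu> A = (\<integral>\<^sup>+ x. emeasure (m x) A \<partial>\<nu>))"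

text \<open>Reversibility dm_x(y)dnu(x) = dm_y(x)dnu(y), stated on measurable rectangles A x B
(which generate the product sigma-algebra).\<close>
definition reversible_rw_space :: "'a measure \<Rightarrow> ('a \<Rightarrow> 'a measure) \<Rightarrow> 'a measure \<Rightarrow> bool" where
  "reversible_rw_space M m \<nu> \<longleftrightarrow> rw_space M m \<nu> \<and>
     (\<forall>A\<in>sets M. \<forall>B\<in>sets M.
        (\<integral>\<^sup>+ x. indicator A x * emeasure (m x) B \<partial>\<nu>) =
        (\<integral>\<^sup>+ x. indicator B x * emeasure (m x) A \<partial>\<nu>))"

definition memL2 :: "'a measure \<Rightarrow> ('a \<Rightarrow> real) \<Rightarrow> bool" where
  "memL2 \<nu> f \<longleftrightarrow> f \<in> borel_measurable \<nu> \<and> integrable \<nu> (\<lambda>x. (f x)\<^sup>2)"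

definition l2norm :: "'a measure \<Rightarrow> ('a \<Rightarrow> real) \<Rightarrow> real" where
  "l2norm \<nu> f = sqrt (\<integral>x. (f x)\<^sup>2 \<partial>\<nu>)"

definition F1 :: "('a \<Rightarrow> 'a measure) \<Rightarrow> 'a measure \<Rightarrow> ('a \<Rightarrow> real) \<Rightarrow> ereal" where
  "F1 m \<nu> u = enn2ereal (ennreal (1/2) *
      (\<integral>\<^sup>+ x. (\<integral>\<^sup>+ y. ennreal \<bar>u y - u x\<bar> \<partial>(m x)) \<partial>\<nu>))"

definition subdiff_L2 :: "'a measure \<Rightarrow> (('a \<Rightarrow> real) \<Rightarrow> ereal) \<Rightarrow> ('a \<Rightarrow> real) \<Rightarrow> ('a \<Rightarrow> real) \<Rightarrow> bool" where
  "subdiff_L2 \<nu> F u g \<longleftrightarrow> memL2 \<nu> u \<and> memL2 \<nu> g \<and> F u \<noteq> \<infinity> \<and>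
     (\<forall>w. memL2 \<nu> w \<longrightarrow> F u + ereal (\<integral>x. g x * (w x - u x) \<partial>\<nu>) \<le> F w)"

definition Delta1 :: "('a \<Rightarrow> 'a measure) \<Rightarrow> 'a measure \<Rightarrow> ('a \<Rightarrow> real) \<Rightarrow> ('a \<Rightarrow> real) \<Rightarrow> bool" where
  "Delta1 m \<nu> u v \<longleftrightarrow> subdiff_L2 \<nu> (F1 m \<nu>) u (\<lambda>x. - v x)"

text \<open>The operator A = -Delta_1^{m1} - mu Delta_1^{m2} on H = L^2(X,nu1).\<close>
definition opA :: "('a \<Rightarrow> 'a measure) \<Rightarrow> 'a measure \<Rightarrow> ('a \<Rightarrow> 'a measure) \<Rightarrow> 'a measure
      \<Rightarrow> ('a \<Rightarrow> real) \<Rightarrow> ('a \<Rightarrow> real) \<Rightarrow> ('a \<Rightarrow> real) \<Rightarrow> bool" where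
  "opA m1 \<nu>1 m2 \<nu>2 \<mu> u v \<longleftrightarrow> memL2 \<nu>1 u \<and> memL2 \<nu>1 v \<and>
     (\<exists>v1 w. Delta1 m1 \<nu>1 u (\<lambda>x. - v1 x) \<and> Delta1 m2 \<nu>2 u w \<and>
        (AE x in \<nu>1. v x = v1 x - \<mu> x * w x))"

definition abs_cont_L2 :: "'a measure \<Rightarrow> (real \<Rightarrow> 'a \<Rightarrow> real) \<Rightarrow> real \<Rightarrow> real \<Rightarrow> bool" where
  "abs_cont_L2 \<nu> u a b \<longleftrightarrow>
     (\<forall>\<epsilon>>0. \<exists>\<delta>>0. \<forall>(n::nat) (s::nat \<Rightarrow> real) (t::nat \<Rightarrow> real).
        (\<forall>i<n. a \<le> s i \<and> s i \<le> t i \<and> t i \<le> b) \<and>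
        (\<forall>i<n. \<forall>j<n. i \<noteq> j \<longrightarrow> t i \<le> s j \<or> t j \<le> s i) \<and>
        (\<Sum>i<n. t i - s i) < \<delta> \<longrightarrow>
        (\<Sum>i<n. l2norm \<nu> (\<lambda>x. u (t i) x - u (s i) x)) < \<epsilon>)"

definition has_L2_derivative :: "'a measure \<Rightarrow> (real \<Rightarrow> 'a \<Rightarrow> real) \<Rightarrow> real \<Rightarrow> ('a \<Rightarrow> real) \<Rightarrow> bool" where
  "has_L2_derivative \<nu> u t d \<longleftrightarrow> memL2 \<nu> d \<and>
     ((\<lambda>h. l2norm \<nu> (\<lambda>x. (u (t + h) x - u t x) / h - d x)) \<longlongrightarrow> 0) (at 0)"

text \<open>Strong solution of u_t + A u \<ni> 0, u(0) = u0 in H = L^2(nu):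
  u \<in> C([0,\<infinity>);H) \<inter> W^{1,2}_loc(0,\<infinity>;H) (locally absolutely continuous on (0,\<infinity>)
  with a.e. strong derivative u_t whose norm is locally square integrable),
  u(0) = u0 and -u_t(t) \<in> A(u(t)) for a.e. t > 0.\<close>
definition strong_solution :: "'a measure \<Rightarrow> (('a \<Rightarrow> real) \<Rightarrow> ('a \<Rightarrow> real) \<Rightarrow> bool)
      \<Rightarrow> ('a \<Rightarrow> real) \<Rightarrow> (real \<Rightarrow> 'a \<Rightarrow> real) \<Rightarrow> bool" where
  "strong_solution \<nu> A u0 u \<longleftrightarrow>
     (\<forall>t\<ge>0. memL2 \<nu> (u t)) \<and>
     (\<forall>t\<ge>0. ((\<lambda>s. l2norm \<nu> (\<lambda>x. u s x - u t x)) \<longlongrightarrow> 0) (at t within {0..})) \<and>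
     (AE x in \<nu>. u 0 x = u0 x) \<and>
     (\<exists>ut :: real \<Rightarrow> 'a \<Rightarrow> real.
        (\<forall>a b. 0 < a \<and> a < b \<longrightarrow>
           abs_cont_L2 \<nu> u a b \<and>
           set_borel_measurable lebesgue {a..b} (\<lambda>t. l2norm \<nu> (ut t)) \<and>
           (\<integral>\<^sup>+ t\<in>{a..b}. ennreal ((l2norm \<nu> (ut t))\<^sup>2) \<partial>lebesgue) < \<infinity>) \<and>
        (AE t in lborel. 0 < t \<longrightarrow>
           has_L2_derivative \<nu> u t (ut t) \<and> A (u t) (\<lambda>x. - ut t x)))"

end

theory Submission
  imports Defs "HOL-Analysis.Analysis"
begin

definition racf :: "(real \<Rightarrow> real) \<Rightarrow> real \<Rightarrow> real \<Rightarrow> bool" where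
 "racf f a b \<longleftrightarrow> (\<forall>\<epsilon>>0. \<exists>\<delta>>0. \<forall>(n::nat) (s::nat\<Rightarrow>real) (t::nat\<Rightarrow>real).
    (\<forall>i<n. a \<le> s i \<and> s i \<le> t i \<and> t i \<le> b) \<and>
    (\<forall>i<n. \<forall>j<n. i \<noteq> j \<longrightarrow> t i \<le> s j \<or> t j \<le> s i) \<and>
    (\<Sum>i<n. t i - s i) < \<delta> \<longrightarrow> (\<Sum>i<n. \<bar>f (t i) - f (s i)\<bar>) < \<epsilon>)"

lemma racfD:
  assumes "racf f a b" "\<epsilon> > 0"
  obtains \<delta> where "\<delta> > 0" "\<And>(n::nat) (s::nat\<Rightarrow>real) (t::nat\<Rightarrow>real). \<forall>i<n. a \<le> s i \<and> s i \<le> t i \<and> t i \<le> b \<Longrightarrow>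
    \<forall>i<n. \<forall>j<n. i \<noteq> j \<longrightarrow> t i \<le> s j \<or> t j \<le> s i \<Longrightarrow>
    (\<Sum>i<n. t i - s i) < \<delta> \<Longrightarrow> (\<Sum>i<n. \<bar>f (t i) - f (s i)\<bar>) < \<epsilon>"
proof -
  have "\<exists>\<delta>>0. \<forall>(n::nat) (s::nat\<Rightarrow>real) (t::nat\<Rightarrow>real).
    (\<forall>i<n. a \<le> s i \<and> s i \<le> t i \<and> t i \<le> b) \<and>
    (\<forall>i<n. \<forall>j<n. i \<noteq> j \<longrightarrow> t i \<le> s j \<or> t j \<le> s i) \<and>
    (\<Sum>i<n. t i - s i) < \<delta> \<longrightarrow> (\<Sum>i<n. \<bar>f (t i) - f (s i)\<bar>) < \<epsilon>"
    using assms(1)[unfolded racf_def, THEN spec[of _ \<epsilon>], THEN mp, OF assms(2)] .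
  then obtain \<delta> where d: "\<delta> > 0" and H: "\<forall>(n::nat) (s::nat\<Rightarrow>real) (t::nat\<Rightarrow>real).
    (\<forall>i<n. a \<le> s i \<and> s i \<le> t i \<and> t i \<le> b) \<and>
    (\<forall>i<n. \<forall>j<n. i \<noteq> j \<longrightarrow> t i \<le> s j \<or> t j \<le> s i) \<and>
    (\<Sum>i<n. t i - s i) < \<delta> \<longrightarrow> (\<Sum>i<n. \<bar>f (t i) - f (s i)\<bar>) < \<epsilon>"
    by (elim exE conjE)
  show ?thesis
  proof (rule that[OF d])
    fix n :: nat and s t :: "nat \<Rightarrow> real"
    assume A: "\<forall>i<n. a \<le> s i \<and> s i \<le> t i \<and> t i \<le> b"
      and B: "\<forall>i<n. \<forall>j<n. i \<noteq> j \<longrightarrow> t i \<le> s j \<or> t j \<le> s i"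
      and C: "(\<Sum>i<n. t i - s i) < \<delta>"
    have "(\<forall>i<n. a \<le> s i \<and> s i \<le> t i \<and> t i \<le> b) \<and>
      (\<forall>i<n. \<forall>j<n. i \<noteq> j \<longrightarrow> t i \<le> s j \<or> t j \<le> s i) \<and> (\<Sum>i<n. t i - s i) < \<delta>"
      using A B C by (intro conjI)
    then show "(\<Sum>i<n. \<bar>f (t i) - f (s i)\<bar>) < \<epsilon>"
      using H[THEN spec[of _ n], THEN spec[of _ s], THEN spec[of _ t]] by (rule mp[rotated])
  qed
qed

lemma racf_cont:
  assumes "racf f a b" "\<epsilon> > 0"
  shows "\<exists>\<delta>>0. \<forall>x\<in>{a..b}. \<forall>y\<in>{a..b}. \<bar>x - y\<bar> < \<delta> \<longrightarrow> \<bar>f x - f y\<bar> < \<epsilon>"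
proof -
  obtain \<delta> where d: "\<delta> > 0" and H: "\<And>(n::nat) (s::nat\<Rightarrow>real) (t::nat\<Rightarrow>real). \<forall>i<n. a \<le> s i \<and> s i \<le> t i \<and> t i \<le> b \<Longrightarrow>
    \<forall>i<n. \<forall>j<n. i \<noteq> j \<longrightarrow> t i \<le> s j \<or> t j \<le> s i \<Longrightarrow>
    (\<Sum>i<n. t i - s i) < \<delta> \<Longrightarrow> (\<Sum>i<n. \<bar>f (t i) - f (s i)\<bar>) < \<epsilon>"
    using racfD[OF assms] by blast
  show ?thesis
  proof (rule exI[of _ \<delta>], intro conjI d ballI impI)
    fix x y assume xy: "x \<in> {a..b}" "y \<in> {a..b}" "\<bar>x - y\<bar> < \<delta>"
    have "(\<Sum>i<(1::nat). \<bar>f ((\<lambda>_. max x y) i) - f ((\<lambda>_. min x y) i)\<bar>) < \<epsilon>"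
      by (rule H) (use xy in \<open>auto simp: max_def min_def\<close>)
    then show "\<bar>f x - f y\<bar> < \<epsilon>"
      by (auto simp: max_def min_def split: if_splits)
  qed
qed

lemma racf_continuous_on:
  assumes "racf f a b" shows "continuous_on {a..b} f"
  unfolding continuous_on_iff
proof (intro ballI allI impI)
  fix x e :: real assume "x \<in> {a..b}" "e > 0"
  then obtain \<delta> where "\<delta> > 0" "\<forall>x\<in>{a..b}. \<forall>y\<in>{a..b}. \<bar>x - y\<bar> < \<delta> \<longrightarrow> \<bar>f x - f y\<bar> < e"
    using racf_cont[OF assms] by blast
  then show "\<exists>d>0. \<forall>x'\<in>{a..b}. dist x' x < d \<longrightarrow> dist (f x') (f x) < e"
    using \<open>x \<in> {a..b}\<close> by (auto simp: dist_real_def)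
qed

lemma racf_lin:
  assumes "racf f a b"
  shows "racf (\<lambda>t. f t + k * t) a b"
  unfolding racf_def
proof (intro allI impI)
  fix \<epsilon> :: real assume e: "\<epsilon> > 0"
  have e2: "\<epsilon>/2 > 0" using e by simp
  obtain \<delta> where d: "\<delta> > 0" and H: "\<And>(n::nat) (s::nat\<Rightarrow>real) (t::nat\<Rightarrow>real). \<forall>i<n. a \<le> s i \<and> s i \<le> t i \<and> t i \<le> b \<Longrightarrow>
    \<forall>i<n. \<forall>j<n. i \<noteq> j \<longrightarrow> t i \<le> s j \<or> t j \<le> s i \<Longrightarrow>
    (\<Sum>i<n. t i - s i) < \<delta> \<Longrightarrow> (\<Sum>i<n. \<bar>f (t i) - f (s i)\<bar>) < \<epsilon>/2"
    using racfD[OF assms e2] by blast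
  define \<delta>' where "\<delta>' = min \<delta> (\<epsilon> / (2 * (\<bar>k\<bar> + 1)))"
  have d': "\<delta>' > 0" using d e by (simp add: \<delta>'_def)
  show "\<exists>\<delta>>0. \<forall>(n::nat) (s::nat\<Rightarrow>real) (t::nat\<Rightarrow>real). (\<forall>i<n. a \<le> s i \<and> s i \<le> t i \<and> t i \<le> b) \<and>
    (\<forall>i<n. \<forall>j<n. i \<noteq> j \<longrightarrow> t i \<le> s j \<or> t j \<le> s i) \<and>
    (\<Sum>i<n. t i - s i) < \<delta> \<longrightarrow> (\<Sum>i<n. \<bar>(f (t i) + k * t i) - (f (s i) + k * s i)\<bar>) < \<epsilon>"
  proof (rule exI[of _ \<delta>'], intro conjI d' allI impI)
    fix n :: nat and s t :: "nat \<Rightarrow> real"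
    assume A: "(\<forall>i<n. a \<le> s i \<and> s i \<le> t i \<and> t i \<le> b) \<and>
      (\<forall>i<n. \<forall>j<n. i \<noteq> j \<longrightarrow> t i \<le> s j \<or> t j \<le> s i) \<and> (\<Sum>i<n. t i - s i) < \<delta>'"
    have S: "(\<Sum>i<n. t i - s i) < \<delta>" "(\<Sum>i<n. t i - s i) < \<epsilon> / (2 * (\<bar>k\<bar> + 1))"
      using A by (auto simp: \<delta>'_def)
    have 1: "(\<Sum>i<n. \<bar>f (t i) - f (s i)\<bar>) < \<epsilon>/2"
      by (rule H) (use A S in auto)
    have "(\<Sum>i<n. \<bar>(f (t i) + k * t i) - (f (s i) + k * s i)\<bar>)
        \<le> (\<Sum>i<n. \<bar>f (t i) - f (s i)\<bar> + \<bar>k\<bar> * (t i - s i))"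
    proof (rule sum_mono)
      fix i assume "i \<in> {..<n}"
      then have st: "s i \<le> t i" using A by auto
      have "\<bar>(f (t i) + k * t i) - (f (s i) + k * s i)\<bar> \<le> \<bar>f (t i) - f (s i)\<bar> + \<bar>k * (t i - s i)\<bar>"
        by (simp add: algebra_simps abs_triangle_ineq[of "f (t i) - f (s i)" "k * (t i - s i)", simplified algebra_simps])
      also have "\<bar>k * (t i - s i)\<bar> = \<bar>k\<bar> * (t i - s i)" using st by (simp add: abs_mult)
      finally show "\<bar>(f (t i) + k * t i) - (f (s i) + k * s i)\<bar> \<le> \<bar>f (t i) - f (s i)\<bar> + \<bar>k\<bar> * (t i - s i)" .
    qed
    also have "\<dots> = (\<Sum>i<n. \<bar>f (t i) - f (s i)\<bar>) + \<bar>k\<bar> * (\<Sum>i<n. t i - s i)"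
      by (simp add: sum.distrib sum_distrib_left)
    also have "\<bar>k\<bar> * (\<Sum>i<n. t i - s i) \<le> \<bar>k\<bar> * (\<epsilon> / (2 * (\<bar>k\<bar> + 1)))"
      using S(2) by (intro mult_left_mono) auto
    also have "\<bar>k\<bar> * (\<epsilon> / (2 * (\<bar>k\<bar> + 1))) \<le> \<epsilon>/2"
      using e by (simp add: field_simps)
    finally show "(\<Sum>i<n. \<bar>(f (t i) + k * t i) - (f (s i) + k * s i)\<bar>) < \<epsilon>"
      using 1 by linarith
  qed
qed


lemma real_intervals_disjoint:
  fixes c d c' d' :: real
  assumes "c < d" "c' < d'" "{c<..<d} \<inter> {c'<..<d'} = {}"
  shows "d \<le> c' \<or> d' \<le> c"
proof (rule ccontr)
  assume "\<not> (d \<le> c' \<or> d' \<le> c)"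
  then have "(max c c' + min d d')/2 \<in> {c<..<d} \<inter> {c'<..<d'}"
    using assms(1,2) by (auto simp: max_def min_def)
  then show False using assms(3) by blast
qed

lemma lusin:
  fixes f :: "real \<Rightarrow> real"
  assumes ac: "racf f a b" and S: "S \<subseteq> {a..b}" and neg: "negligible S"
  shows "negligible (f ` S)"
proof (cases "a < b")
  case False
  then have "S \<subseteq> {a}" using S by auto
  then have "finite (f ` S)" by (meson finite.emptyI finite_insert finite_imageI finite_subset)
  then show ?thesis by (rule negligible_finite)
next
  case ab: True
  have cont: "continuous_on {a..b} f" by (rule racf_continuous_on[OF ac])
  show ?thesis
    unfolding negligible_outer_le
  proof (intro allI impI)
    fix e :: real assume e: "e > 0"
    obtain \<delta> where d: "\<delta> > 0" and H: "\<And>(n::nat) (s::nat\<Rightarrow>real) (t::nat\<Rightarrow>real). \<forall>i<n. a \<le> s i \<and> s i \<le> t i \<and> t i \<le> b \<Longrightarrow>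
      \<forall>i<n. \<forall>j<n. i \<noteq> j \<longrightarrow> t i \<le> s j \<or> t j \<le> s i \<Longrightarrow>
      (\<Sum>i<n. t i - s i) < \<delta> \<Longrightarrow> (\<Sum>i<n. \<bar>f (t i) - f (s i)\<bar>) < e"
      using racfD[OF ac e] by blast
    have Sm: "S \<in> lmeasurable" and S0: "measure lebesgue S = 0"
      using neg negligible_iff_measure by auto
    have d2: "\<delta>/2 > 0" using d by simp
    have SS: "S \<subseteq> cbox a b" using S by simp
    obtain \<D> where cD: "countable \<D>"
        and Dsub: "\<And>K. K \<in> \<D> \<Longrightarrow> K \<subseteq> cbox a b \<and> K \<noteq> {} \<and> (\<exists>c d. K = cbox c d)"
        and pw: "pairwise (\<lambda>A B. interior A \<inter> interior B = {}) \<D>"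
        and grid: "\<And>u v. cbox u v \<in> \<D> \<Longrightarrow> \<exists>n. \<forall>i \<in> Basis. v \<bullet> i - u \<bullet> i = (b \<bullet> i - a \<bullet> i)/2^n"
        and intK: "\<And>K. \<lbrakk>K \<in> \<D>; box a b \<noteq> {}\<rbrakk> \<Longrightarrow> interior K \<noteq> {}"
        and cov: "S \<subseteq> \<Union>\<D>" and Dm: "\<Union>\<D> \<in> lmeasurable"
        and Dmeas: "measure lebesgue (\<Union>\<D>) \<le> measure lebesgue S + \<delta>/2"
      by (rule measurable_outer_intervals_bounded[OF Sm SS d2]) iprover
    define lo where "lo K = Inf K" for K :: "real set"
    define hi where "hi K = Sup K" for K :: "real set"
    have Kform: "K = {lo K..hi K} \<and> a \<le> lo K \<and> lo K < hi K \<and> hi K \<le> b" if K: "K \<in> \<D>" for K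
    proof -
      obtain c d where Kcd: "K = {c..d}" using Dsub[OF K] by auto
      have "box a b \<noteq> {}" using ab by simp
      then have "interior K \<noteq> {}" using intK[OF K] by blast
      then have cd: "c < d" using Kcd by auto
      have "lo K = c" "hi K = d" using cd Kcd by (auto simp: lo_def hi_def)
      moreover have "{c..d} \<subseteq> {a..b}" using Dsub[OF K] Kcd by auto
      ultimately show ?thesis using cd Kcd by auto
    qed
    have Ksets: "K \<in> sets lebesgue" if "K \<in> \<D>" for K using Kform[OF that] by (metis lmeasurable_interval(1) fmeasurableD)
    have Ksub: "K \<subseteq> {a..b}" if "K \<in> \<D>" for K using Dsub[OF that] by simp
    have exmin: "\<exists>x\<in>K. \<forall>y\<in>K. f x \<le> f y" if K: "K \<in> \<D>" for K
    proof -
      have "continuous_on K f" using cont Ksub[OF K] continuous_on_subset by blast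
      moreover have "compact K" using Kform[OF K] by (metis compact_Icc)
      moreover have "K \<noteq> {}" using Kform[OF K] by auto
      ultimately show ?thesis using continuous_attains_inf by blast
    qed
    have exmax: "\<exists>x\<in>K. \<forall>y\<in>K. f y \<le> f x" if K: "K \<in> \<D>" for K
    proof -
      have "continuous_on K f" using cont Ksub[OF K] continuous_on_subset by blast
      moreover have "compact K" using Kform[OF K] by (metis compact_Icc)
      moreover have "K \<noteq> {}" using Kform[OF K] by auto
      ultimately show ?thesis using continuous_attains_sup by blast
    qed
    define xm where "xm K = (SOME x. x\<in>K \<and> (\<forall>y\<in>K. f x \<le> f y))" for K
    define xM where "xM K = (SOME x. x\<in>K \<and> (\<forall>y\<in>K. f y \<le> f x))" for K
    have xm: "xm K \<in> K \<and> (\<forall>y\<in>K. f (xm K) \<le> f y)" if "K \<in> \<D>" for K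
      unfolding xm_def by (rule someI_ex) (use exmin[OF that] in blast)
    have xM: "xM K \<in> K \<and> (\<forall>y\<in>K. f y \<le> f (xM K))" if "K \<in> \<D>" for K
      unfolding xM_def by (rule someI_ex) (use exmax[OF that] in blast)
    define J where "J K = {f (xm K) .. f (xM K)}" for K
    define sK where "sK K = min (xm K) (xM K)" for K
    define tK where "tK K = max (xm K) (xM K)" for K
    have measJ: "measure lebesgue (J K) = \<bar>f (tK K) - f (sK K)\<bar>" if K: "K \<in> \<D>" for K
    proof -
      have "f (xm K) \<le> f (xM K)" using xm[OF K] xM[OF K] by blast
      then show ?thesis unfolding J_def sK_def tK_def by (auto simp: min_def max_def)
    qed
    have cover: "f ` S \<subseteq> (\<Union>K\<in>\<D>. J K)"
    proof
      fix y assume "y \<in> f ` S"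
      then obtain z where z: "z \<in> S" "y = f z" by blast
      then obtain K where K: "K \<in> \<D>" "z \<in> K" using cov by blast
      then have "y \<in> J K" using xm[OF K(1)] xM[OF K(1)] z unfolding J_def by auto
      then show "y \<in> (\<Union>K\<in>\<D>. J K)" using K by blast
    qed
    have bound: "measure lebesgue (\<Union>K\<in>I'. J K) \<le> e" if I': "I' \<subseteq> \<D>" "finite I'" for I'
    proof -
      have "measure lebesgue (\<Union>K\<in>I'. J K) \<le> (\<Sum>K\<in>I'. measure lebesgue (J K))"
        by (rule measure_UNION_le) (use I' in \<open>auto simp: J_def\<close>)
      also have "\<dots> = (\<Sum>K\<in>I'. \<bar>f (tK K) - f (sK K)\<bar>)"
        using I' measJ by (intro sum.cong) auto
      also have "\<dots> < e"
      proof -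
        obtain g where g: "bij_betw g {0..<card I'} I'" using ex_bij_betw_nat_finite[OF I'(2)] by blast
        define n where "n = card I'"
        have g': "bij_betw g {..<n} I'" using g by (simp add: n_def lessThan_atLeast0)
        have gD: "g i \<in> \<D>" if "i < n" for i using g' that I'(1) bij_betwE by blast
        have eq: "(\<Sum>K\<in>I'. \<bar>f (tK K) - f (sK K)\<bar>) = (\<Sum>i<n. \<bar>f (tK (g i)) - f (sK (g i))\<bar>)"
          using sum.reindex_bij_betw[OF g', of "\<lambda>K. \<bar>f (tK K) - f (sK K)\<bar>"] by simp
        have stin: "sK K \<in> K" "tK K \<in> K" "sK K \<le> tK K" if "K \<in> \<D>" for K
          using xm[OF that] xM[OF that] by (auto simp: sK_def tK_def min_def max_def)
        have "(\<Sum>i<n. \<bar>f ((tK \<circ> g) i) - f ((sK \<circ> g) i)\<bar>) < e"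
        proof (rule H)
          show "\<forall>i<n. a \<le> (sK \<circ> g) i \<and> (sK \<circ> g) i \<le> (tK \<circ> g) i \<and> (tK \<circ> g) i \<le> b"
            using stin gD Ksub by fastforce
          show "\<forall>i<n. \<forall>j<n. i \<noteq> j \<longrightarrow> (tK \<circ> g) i \<le> (sK \<circ> g) j \<or> (tK \<circ> g) j \<le> (sK \<circ> g) i"
          proof (intro allI impI)
            fix i j assume ij: "i < n" "j < n" "i \<noteq> j"
            then have gij: "g i \<noteq> g j" using g' by (metis bij_betw_iff_bijections lessThan_iff)
            have Ki: "g i \<in> \<D>" and Kj: "g j \<in> \<D>" using gD ij by auto
            have "interior (g i) \<inter> interior (g j) = {}" using pw Ki Kj gij by (auto simp: pairwise_def)
            then have "{lo (g i)<..<hi (g i)} \<inter> {lo (g j)<..<hi (g j)} = {}"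
              using Kform[OF Ki] Kform[OF Kj] by (metis interior_atLeastAtMost_real)
            then have "hi (g i) \<le> lo (g j) \<or> hi (g j) \<le> lo (g i)"
              using Kform[OF Ki] Kform[OF Kj] real_intervals_disjoint by blast
            moreover have "tK (g i) \<le> hi (g i)" "lo (g j) \<le> sK (g j)" "tK (g j) \<le> hi (g j)" "lo (g i) \<le> sK (g i)"
              using stin[OF Ki] stin[OF Kj] Kform[OF Ki] Kform[OF Kj]
              by (metis atLeastAtMost_iff)+
            ultimately show "(tK \<circ> g) i \<le> (sK \<circ> g) j \<or> (tK \<circ> g) j \<le> (sK \<circ> g) i" by auto
          qed
          have "(\<Sum>i<n. (tK \<circ> g) i - (sK \<circ> g) i) \<le> (\<Sum>i<n. hi (g i) - lo (g i))"
          proof (rule sum_mono)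
            fix i assume "i \<in> {..<n}"
            then have Ki: "g i \<in> \<D>" using gD by auto
            show "(tK \<circ> g) i - (sK \<circ> g) i \<le> hi (g i) - lo (g i)"
              using stin[OF Ki] Kform[OF Ki] by (metis atLeastAtMost_iff comp_apply diff_mono)
          qed
          also have "\<dots> = (\<Sum>K\<in>I'. hi K - lo K)"
            using sum.reindex_bij_betw[OF g', of "\<lambda>K. hi K - lo K"] by simp
          also have "\<dots> = (\<Sum>K\<in>I'. measure lebesgue K)"
          proof (rule sum.cong)
            fix K assume "K \<in> I'"
            then have K: "K \<in> \<D>" using I' by auto
            show "hi K - lo K = measure lebesgue K"
            proof -
              have lh: "lo K < hi K" using Kform[OF K] by blast
              have "measure lebesgue {lo K..hi K} = hi K - lo K" using lh by simp
              then show ?thesis using Kform[OF K] by metis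
            qed
          qed simp
          also have "\<dots> = measure lebesgue (\<Union>I')"
          proof (rule measure_negligible_finite_Union[symmetric])
            show "finite I'" by fact
            show "\<And>S. S \<in> I' \<Longrightarrow> S \<in> lmeasurable" using I' Kform by (metis lmeasurable_interval(1) subsetD)
            show "pairwise (\<lambda>S T. negligible (S \<inter> T)) I'"
              unfolding pairwise_def
            proof (intro ballI impI)
              fix K K' assume KK: "K \<in> I'" "K' \<in> I'" "K \<noteq> K'"
              then have K: "K \<in> \<D>" and K': "K' \<in> \<D>" using I' by auto
              have "interior K \<inter> interior K' = {}" using pw KK K K' by (auto simp: pairwise_def)
              then have "{lo K<..<hi K} \<inter> {lo K'<..<hi K'} = {}"
                using Kform[OF K] Kform[OF K'] by (metis interior_atLeastAtMost_real)
              then have "hi K \<le> lo K' \<or> hi K' \<le> lo K"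
                using Kform[OF K] Kform[OF K'] real_intervals_disjoint by blast
              then have "K \<inter> K' \<subseteq> {hi K, lo K}"
                using Kform[OF K] Kform[OF K'] by (auto, metis atLeastAtMost_iff order.trans antisym)+
              then show "negligible (K \<inter> K')" by (meson finite.emptyI finite.insertI negligible_finite negligible_subset)
            qed
          qed
          also have "\<dots> \<le> measure lebesgue (\<Union>\<D>)"
            by (rule measure_mono_fmeasurable) (use I' Dm Ksets in \<open>auto intro!: sets.finite_Union\<close>)
          also have "\<dots> \<le> \<delta>/2" using Dmeas S0 by simp
          also have "\<dots> < \<delta>" using d by simp
          finally show "(\<Sum>i<n. (tK \<circ> g) i - (sK \<circ> g) i) < \<delta>" .
        qed
        then show ?thesis using eq by simp
      qed
      finally show ?thesis by simp
    qed
    show "\<exists>T. f ` S \<subseteq> T \<and> T \<in> lmeasurable \<and> measure lebesgue T \<le> e"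
    proof (rule exI[of _ "\<Union>K\<in>\<D>. J K"], intro conjI)
      show "f ` S \<subseteq> (\<Union>K\<in>\<D>. J K)" by (rule cover)
      show "(\<Union>K\<in>\<D>. J K) \<in> lmeasurable"
        by (rule fmeasurable_UN_bound[OF cD _ bound]) (auto simp: J_def)
      show "measure lebesgue (\<Union>K\<in>\<D>. J K) \<le> e"
        by (rule measure_UN_bound[OF cD _ bound]) (auto simp: J_def)
    qed
  qed
qed


lemma ac_mono:
  fixes f :: "real \<Rightarrow> real"
  assumes ab: "a \<le> b" and ac: "racf f a b" and N: "negligible N"
    and der: "\<And>t. t \<in> {a<..b} \<Longrightarrow> t \<notin> N \<Longrightarrow> \<exists>D\<le>0. (f has_real_derivative D) (at t)"
  shows "f b \<le> f a"
proof (rule ccontr)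
  assume "\<not> f b \<le> f a"
  then have lt: "f a < f b" by simp
  then have ab': "a < b" using ab by (cases "a = b") auto
  define \<epsilon> where "\<epsilon> = (f b - f a) / (2*(b - a))"
  have ep: "\<epsilon> > 0" using lt ab' by (simp add: \<epsilon>_def)
  define g where "g t = f t + (-\<epsilon>) * t" for t
  have acg: "racf g a b" unfolding g_def by (rule racf_lin[OF ac])
  have "\<epsilon> * (b - a) = (f b - f a)/2" using ab' by (simp add: \<epsilon>_def field_simps)
  then have gab: "g a < g b" using lt by (simp add: g_def algebra_simps)
  have sub: "{g a<..<g b} \<subseteq> g ` (N \<inter> {a..b})"
  proof
    fix y assume y: "y \<in> {g a<..<g b}"
    define P where "P = {r \<in> {a..b}. y \<le> g r}"
    define t where "t = Inf P"
    have bP: "b \<in> P" using y ab by (auto simp: P_def)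
    have Pne: "P \<noteq> {}" using bP by blast
    have Pbdd: "bdd_below P" unfolding bdd_below_def P_def by auto
    have ta: "a \<le> t" unfolding t_def by (rule cInf_greatest[OF Pne]) (auto simp: P_def)
    have tb: "t \<le> b" unfolding t_def by (rule cInf_lower[OF bP Pbdd])
    have below: "g r < y" if "a \<le> r" "r < t" for r
    proof -
      have "r \<notin> P"
      proof
        assume "r \<in> P" then have "t \<le> r" unfolding t_def by (rule cInf_lower[OF _ Pbdd])
        then show False using that by simp
      qed
      then show ?thesis using that tb by (auto simp: P_def)
    qed
    have ge: "y \<le> g t"
    proof (rule ccontr)
      assume "\<not> y \<le> g t"
      then have e': "y - g t > 0" by simp
      obtain \<delta> where d: "\<delta> > 0" and H: "\<forall>x\<in>{a..b}. \<forall>z\<in>{a..b}. \<bar>x - z\<bar> < \<delta> \<longrightarrow> \<bar>g x - g z\<bar> < y - g t"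
        using racf_cont[OF acg e'] by blast
      have "Inf P < t + \<delta>" using d by (simp add: t_def)
      then obtain p where p: "p \<in> P" "p < t + \<delta>" using cInf_less_iff[OF Pne Pbdd] by blast
      have "t \<le> p" unfolding t_def by (rule cInf_lower[OF p(1) Pbdd])
      have pab: "p \<in> {a..b}" "y \<le> g p" using p(1) by (auto simp: P_def)
      have "\<bar>g p - g t\<bar> < y - g t" using H pab \<open>t \<le> p\<close> p(2) ta tb by auto
      then show False using pab by linarith
    qed
    have ta': "a < t"
    proof (rule ccontr)
      assume "\<not> a < t" then have "t = a" using ta by simp
      then show False using ge y by simp
    qed
    have le: "g t \<le> y"
    proof (rule ccontr)
      assume "\<not> g t \<le> y"
      then have e': "g t - y > 0" by simp
      obtain \<delta> where d: "\<delta> > 0" and H: "\<forall>x\<in>{a..b}. \<forall>z\<in>{a..b}. \<bar>x - z\<bar> < \<delta> \<longrightarrow> \<bar>g x - g z\<bar> < g t - y"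
        using racf_cont[OF acg e'] by blast
      define r where "r = max a (t - \<delta>/2)"
      have r: "a \<le> r" "r < t" "\<bar>r - t\<bar> < \<delta>" using d ta' by (auto simp: r_def)
      have "\<bar>g r - g t\<bar> < g t - y" using H r ta tb by auto
      moreover have "g r < y" using below r by simp
      ultimately show False by linarith
    qed
    have tN: "t \<in> N"
    proof (rule ccontr)
      assume "t \<notin> N"
      then obtain D where D: "D \<le> 0" "(f has_real_derivative D) (at t)" using der ta' tb by auto
      have "(g has_real_derivative D + (-\<epsilon>)) (at t)"
        unfolding g_def by (auto intro!: derivative_eq_intros D(2))
      moreover have "D + (-\<epsilon>) < 0" using D ep by simp
      ultimately obtain d where d: "d > 0" "\<forall>h>0. h < d \<longrightarrow> g t < g (t - h)"
        using DERIV_neg_dec_left by blast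
      obtain m where m: "m \<le> t - a" "m > 0" "m \<le> d" using d ta' by (metis min.cobounded1 min.cobounded2 min_less_iff_conj diff_gt_0_iff_gt)
      define h where "h = m / 2"
      have h1: "h > 0" using m unfolding h_def by simp
      have h2: "h < d" using m unfolding h_def by simp
      have h3: "a \<le> t - h" using m unfolding h_def by simp
      have h4: "t - h < t" using m unfolding h_def by simp
      note h = h1 h2 h3 h4
      have "g t < g (t - h)" using d h by blast
      moreover have "g (t - h) < y" using below h by simp
      ultimately show False using le ge by linarith
    qed
    have "y = g t" using le ge by simp
    then show "y \<in> g ` (N \<inter> {a..b})" using tN ta tb by auto
  qed
  have "negligible (g ` (N \<inter> {a..b}))"
    by (rule lusin[OF acg]) (auto intro: negligible_subset[OF N])
  then have "negligible {g a<..<g b}" using sub negligible_subset by blast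
  then have "box (g a) (g b) = {}" using negligible_interval(2)[of "g a" "g b"] by (simp add: box_real)
  then show False using gab by (simp add: box_real)
qed


definition Q :: "'a measure \<Rightarrow> ('a \<Rightarrow> real) \<Rightarrow> real" where
  "Q \<nu> f = (\<integral>x. (f x)\<^sup>2 \<partial>\<nu>)"

lemma Q_nonneg: "Q \<nu> f \<ge> 0" unfolding Q_def by simp

lemma l2norm_Q: "l2norm \<nu> f = sqrt (Q \<nu> f)" by (simp add: l2norm_def Q_def)

lemma l2norm_nonneg: "l2norm \<nu> f \<ge> 0" by (simp add: l2norm_def)

lemma l2norm_sq: "(l2norm \<nu> f)\<^sup>2 = Q \<nu> f" by (simp add: l2norm_Q Q_nonneg)

lemma memL2_meas: "memL2 \<nu> f \<Longrightarrow> f \<in> borel_measurable \<nu>" by (simp add: memL2_def)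
lemma memL2_int: "memL2 \<nu> f \<Longrightarrow> integrable \<nu> (\<lambda>x. (f x)\<^sup>2)" by (simp add: memL2_def)

lemma abs_mult_le_sq: "\<bar>(a::real) * b\<bar> \<le> a\<^sup>2 + b\<^sup>2"
proof -
  have "0 \<le> (\<bar>a\<bar> - \<bar>b\<bar>)\<^sup>2" by simp
  also have "(\<bar>a\<bar> - \<bar>b\<bar>)\<^sup>2 = a\<^sup>2 + b\<^sup>2 - 2 * (\<bar>a\<bar> * \<bar>b\<bar>)"
    by (simp add: power2_diff)
  finally have 1: "2 * (\<bar>a\<bar> * \<bar>b\<bar>) \<le> a\<^sup>2 + b\<^sup>2" by linarith
  have 2: "0 \<le> a\<^sup>2 + b\<^sup>2" by simp
  have "\<bar>a * b\<bar> = \<bar>a\<bar> * \<bar>b\<bar>" by (rule abs_mult)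
  then show ?thesis using 1 2 by linarith
qed

lemma memL2_mult_int:
  assumes "memL2 \<nu> f" "memL2 \<nu> g"
  shows "integrable \<nu> (\<lambda>x. f x * g x)"
proof (rule Bochner_Integration.integrable_bound)
  show "integrable \<nu> (\<lambda>x. (f x)\<^sup>2 + (g x)\<^sup>2)" using assms by (auto simp: memL2_def)
  show "(\<lambda>x. f x * g x) \<in> borel_measurable \<nu>" using assms by (auto simp: memL2_def)
  show "AE x in \<nu>. norm (f x * g x) \<le> norm ((f x)\<^sup>2 + (g x)\<^sup>2)"
    by (intro AE_I2) (simp add: abs_mult_le_sq)
qed

lemma memL2_add:
  assumes "memL2 \<nu> f" "memL2 \<nu> g"
  shows "memL2 \<nu> (\<lambda>x. f x + g x)"
proof -
  have fg: "integrable \<nu> (\<lambda>x. f x * g x)" by (rule memL2_mult_int[OF assms])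
  have ff: "integrable \<nu> (\<lambda>x. (f x)\<^sup>2)" and gg: "integrable \<nu> (\<lambda>x. (g x)\<^sup>2)"
    using assms by (auto simp: memL2_def)
  have eq: "(\<lambda>x. (f x + g x)\<^sup>2) = (\<lambda>x. (f x)\<^sup>2 + 2 * (f x * g x) + (g x)\<^sup>2)"
    by (rule ext) (simp add: power2_sum)
  have i: "integrable \<nu> (\<lambda>x. (f x + g x)\<^sup>2)"
    unfolding eq by (intro Bochner_Integration.integrable_add integrable_mult_right ff gg fg)
  have m: "(\<lambda>x. f x + g x) \<in> borel_measurable \<nu>"
    using assms by (intro borel_measurable_add) (auto simp: memL2_def)
  show ?thesis unfolding memL2_def using i m by blast
qed

lemma memL2_cmult:
  assumes "memL2 \<nu> f"
  shows "memL2 \<nu> (\<lambda>x. c * f x)"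
proof -
  have m: "(\<lambda>x. c * f x) \<in> borel_measurable \<nu>"
    using assms by (intro borel_measurable_times borel_measurable_const) (auto simp: memL2_def)
  have eq: "(\<lambda>x. (c * f x)\<^sup>2) = (\<lambda>x. c\<^sup>2 * (f x)\<^sup>2)"
    by (rule ext) (simp add: power_mult_distrib)
  have i: "integrable \<nu> (\<lambda>x. (c * f x)\<^sup>2)"
    unfolding eq using assms by (intro integrable_mult_right) (auto simp: memL2_def)
  show ?thesis unfolding memL2_def using i m by blast
qed

lemma memL2_uminus:
  assumes "memL2 \<nu> f"
  shows "memL2 \<nu> (\<lambda>x. - f x)"
  using assms by (simp add: memL2_def)

lemma memL2_diff:
  assumes "memL2 \<nu> f" "memL2 \<nu> g"
  shows "memL2 \<nu> (\<lambda>x. f x - g x)"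
  using memL2_add[OF assms(1) memL2_uminus[OF assms(2)]] by simp

lemma memL2_zero: "memL2 \<nu> (\<lambda>x. 0)" by (simp add: memL2_def)

lemma memL2_const: "finite_measure \<nu> \<Longrightarrow> memL2 \<nu> (\<lambda>x. c)"
  by (simp add: memL2_def finite_measure.integrable_const)

lemma memL2_bounded:
  assumes "finite_measure \<nu>" "f \<in> borel_measurable \<nu>" "\<And>x. x \<in> space \<nu> \<Longrightarrow> \<bar>f x\<bar> \<le> C"
  shows "memL2 \<nu> f"
  unfolding memL2_def
proof
  show "f \<in> borel_measurable \<nu>" by fact
  show "integrable \<nu> (\<lambda>x. (f x)\<^sup>2)"
  proof (rule Bochner_Integration.integrable_bound)
    show "integrable \<nu> (\<lambda>x. C\<^sup>2)" using assms(1) by (simp add: finite_measure.integrable_const)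
    show "(\<lambda>x. (f x)\<^sup>2) \<in> borel_measurable \<nu>" using assms(2) by simp
    show "AE x in \<nu>. norm ((f x)\<^sup>2) \<le> norm (C\<^sup>2)"
    proof (rule AE_I2)
      fix x assume "x \<in> space \<nu>"
      then have "\<bar>f x\<bar> \<le> C" by (rule assms(3))
      then have "\<bar>f x\<bar>\<^sup>2 \<le> C\<^sup>2" by (intro power_mono) auto
      then show "norm ((f x)\<^sup>2) \<le> norm (C\<^sup>2)" by simp
    qed
  qed
qed

lemma memL2_integrable:
  assumes "finite_measure \<nu>" "memL2 \<nu> f"
  shows "integrable \<nu> f"
proof (rule Bochner_Integration.integrable_bound)
  show "integrable \<nu> (\<lambda>x. (f x)\<^sup>2 + 1)" using assms by (auto simp: memL2_def finite_measure.integrable_const)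
  show "f \<in> borel_measurable \<nu>" using assms by (simp add: memL2_def)
  show "AE x in \<nu>. norm (f x) \<le> norm ((f x)\<^sup>2 + 1)"
  proof (rule AE_I2)
    fix x
    have "\<bar>f x\<bar> \<le> (f x)\<^sup>2 + 1"
      using abs_mult_le_sq[of "f x" 1] by simp
    then show "norm (f x) \<le> norm ((f x)\<^sup>2 + 1)" by simp
  qed
qed

lemma discr:
  fixes A B C :: real
  assumes "\<And>x. 0 \<le> A * x\<^sup>2 - 2 * B * x + C" "A \<ge> 0"
  shows "B\<^sup>2 \<le> A * C"
proof (cases "A = 0")
  case True
  show ?thesis
  proof (rule ccontr)
    assume "\<not> ?thesis"
    then have "B \<noteq> 0" using True by simp
    have "0 \<le> A * ((C+1)/(2*B))\<^sup>2 - 2 * B * ((C+1)/(2*B)) + C" by (rule assms(1))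
    then show False using True \<open>B \<noteq> 0\<close> by (simp add: field_simps)
  qed
next
  case False
  then have A: "A > 0" using assms(2) by simp
  have "0 \<le> A * (B/A)\<^sup>2 - 2 * B * (B/A) + C" by (rule assms(1))
  then have "0 \<le> C - B\<^sup>2 / A" using A by (simp add: field_simps power2_eq_square)
  then show ?thesis using A by (simp add: field_simps)
qed

lemma cauchy_schwarz_L2:
  assumes "memL2 \<nu> f" "memL2 \<nu> g"
  shows "\<bar>\<integral>x. f x * g x \<partial>\<nu>\<bar> \<le> l2norm \<nu> f * l2norm \<nu> g"
proof -
  have fg: "integrable \<nu> (\<lambda>x. f x * g x)" by (rule memL2_mult_int[OF assms])
  have ff: "integrable \<nu> (\<lambda>x. (f x)\<^sup>2)" and gg: "integrable \<nu> (\<lambda>x. (g x)\<^sup>2)"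
    using assms by (auto simp: memL2_def)
  have "0 \<le> Q \<nu> f * t\<^sup>2 - 2 * (\<integral>x. f x * g x \<partial>\<nu>) * t + Q \<nu> g" for t
  proof -
    have "0 \<le> (\<integral>x. (t * f x - g x)\<^sup>2 \<partial>\<nu>)" by simp
    also have "(\<integral>x. (t * f x - g x)\<^sup>2 \<partial>\<nu>) = (\<integral>x. t\<^sup>2 * (f x)\<^sup>2 - 2 * t * (f x * g x) + (g x)\<^sup>2 \<partial>\<nu>)"
      by (rule Bochner_Integration.integral_cong) (auto simp: power2_eq_square algebra_simps)
    also have "\<dots> = t\<^sup>2 * Q \<nu> f - 2 * t * (\<integral>x. f x * g x \<partial>\<nu>) + Q \<nu> g"
      using ff gg fg by (simp add: Q_def)
    finally show ?thesis by (simp add: algebra_simps)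
  qed
  then have "(\<integral>x. f x * g x \<partial>\<nu>)\<^sup>2 \<le> Q \<nu> f * Q \<nu> g"
    by (intro discr Q_nonneg)
  then have "sqrt ((\<integral>x. f x * g x \<partial>\<nu>)\<^sup>2) \<le> sqrt (Q \<nu> f * Q \<nu> g)"
    by (rule real_sqrt_le_mono)
  then show ?thesis by (simp add: l2norm_Q real_sqrt_mult)
qed

lemma Q_add:
  assumes "memL2 \<nu> f" "memL2 \<nu> g"
  shows "Q \<nu> (\<lambda>x. f x + g x) = Q \<nu> f + 2 * (\<integral>x. f x * g x \<partial>\<nu>) + Q \<nu> g"
proof -
  have fg: "integrable \<nu> (\<lambda>x. f x * g x)" by (rule memL2_mult_int[OF assms])
  have ff: "integrable \<nu> (\<lambda>x. (f x)\<^sup>2)" and gg: "integrable \<nu> (\<lambda>x. (g x)\<^sup>2)"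
    using assms by (auto simp: memL2_def)
  have "Q \<nu> (\<lambda>x. f x + g x) = (\<integral>x. (f x)\<^sup>2 + 2 * (f x * g x) + (g x)\<^sup>2 \<partial>\<nu>)"
    unfolding Q_def by (rule Bochner_Integration.integral_cong) (auto simp: power2_sum)
  also have "\<dots> = Q \<nu> f + 2 * (\<integral>x. f x * g x \<partial>\<nu>) + Q \<nu> g"
    using ff gg fg by (simp add: Q_def)
  finally show ?thesis .
qed

lemma minkowski_L2:
  assumes "memL2 \<nu> f" "memL2 \<nu> g"
  shows "l2norm \<nu> (\<lambda>x. f x + g x) \<le> l2norm \<nu> f + l2norm \<nu> g"
proof -
  have "Q \<nu> (\<lambda>x. f x + g x) \<le> Q \<nu> f + 2 * (l2norm \<nu> f * l2norm \<nu> g) + Q \<nu> g"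
    using Q_add[OF assms] cauchy_schwarz_L2[OF assms] by linarith
  also have "\<dots> = (l2norm \<nu> f + l2norm \<nu> g)\<^sup>2"
    by (simp add: power2_sum l2norm_sq)
  finally have "sqrt (Q \<nu> (\<lambda>x. f x + g x)) \<le> sqrt ((l2norm \<nu> f + l2norm \<nu> g)\<^sup>2)"
    by (rule real_sqrt_le_mono)
  then show ?thesis by (simp add: l2norm_Q[symmetric] l2norm_nonneg)
qed

lemma l2norm_cmult: "l2norm \<nu> (\<lambda>x. c * f x) = \<bar>c\<bar> * l2norm \<nu> f"
  by (simp add: l2norm_def power_mult_distrib real_sqrt_mult)

lemma l1_le_l2:
  assumes "finite_measure \<nu>" "memL2 \<nu> f"
  shows "(\<integral>x. \<bar>f x\<bar> \<partial>\<nu>) \<le> sqrt (measure \<nu> (space \<nu>)) * l2norm \<nu> f"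
proof -
  have a: "memL2 \<nu> (\<lambda>x. \<bar>f x\<bar>)" using assms(2) unfolding memL2_def
    by (auto intro: borel_measurable_abs)
  have "\<bar>\<integral>x. \<bar>f x\<bar> * 1 \<partial>\<nu>\<bar> \<le> l2norm \<nu> (\<lambda>x. \<bar>f x\<bar>) * l2norm \<nu> (\<lambda>x. 1)"
    by (rule cauchy_schwarz_L2[OF a memL2_const[OF assms(1)]])
  moreover have "l2norm \<nu> (\<lambda>x. 1) = sqrt (measure \<nu> (space \<nu>))"
    using assms(1) by (simp add: l2norm_def finite_measure.emeasure_eq_measure)
  moreover have "l2norm \<nu> (\<lambda>x. \<bar>f x\<bar>) = l2norm \<nu> f" by (simp add: l2norm_def)
  ultimately show ?thesis by (simp add: mult.commute)
qed


lemma l2norm_cong: "(\<And>x. f x = g x) \<Longrightarrow> l2norm \<nu> f = l2norm \<nu> g"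
  by (simp add: l2norm_def)

lemma deriv_lemma:
  fixes U :: "real \<Rightarrow> 'a \<Rightarrow> real" and F :: "real \<Rightarrow> real"
  assumes der: "has_L2_derivative \<nu> U t d"
    and L2: "\<forall>\<^sub>F h in at 0. memL2 \<nu> (U (t + h))" and Ut: "memL2 \<nu> (U t)"
    and bnd: "\<forall>\<^sub>F h in at 0. \<bar>F (t + h) - F t - h * D\<bar> \<le>
        B * l2norm \<nu> (\<lambda>x. U (t + h) x - U t x - h * d x) + K * Q \<nu> (\<lambda>x. U (t + h) x - U t x)"
    and B: "B \<ge> 0" and K: "K \<ge> 0"
  shows "(F has_real_derivative D) (at t)"
proof -
  have dL2: "memL2 \<nu> d" using der by (simp add: has_L2_derivative_def)
  define r where "r h = l2norm \<nu> (\<lambda>x. (U (t + h) x - U t x) / h - d x)" for h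
  have r0: "(r \<longlongrightarrow> 0) (at 0)" using der unfolding has_L2_derivative_def r_def[abs_def] by simp
  have main: "\<forall>\<^sub>F h in at 0. norm ((F (t + h) - F t) / h - D) \<le> B * r h + 2 * K * \<bar>h\<bar> * (Q \<nu> d + (r h)\<^sup>2)"
    using L2 bnd eventually_at_filter
  proof -
    have "\<forall>\<^sub>F h in at (0::real). h \<noteq> 0" by (simp add: eventually_at_filter)
    then show ?thesis using L2 bnd
    proof eventually_elim
      case (elim h)
      note h0 = elim(1) and Uh = elim(2) and bd = elim(3)
      define e where "e x = U (t + h) x - U t x - h * d x" for x
      define k where "k x = U (t + h) x - U t x" for x
      have kL2: "memL2 \<nu> k" unfolding k_def by (rule memL2_diff[OF Uh Ut])
      have eL2: "memL2 \<nu> e" unfolding e_def by (rule memL2_diff[OF memL2_diff[OF Uh Ut] memL2_cmult[OF dL2]])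
      have eeq: "e x = h * ((U (t + h) x - U t x) / h - d x)" for x
        using h0 by (simp add: e_def field_simps)
      have le: "l2norm \<nu> e = \<bar>h\<bar> * r h"
        unfolding r_def using l2norm_cmult[of \<nu> h "\<lambda>x. (U (t + h) x - U t x) / h - d x"]
        by (simp add: eeq[abs_def])
      have Qe: "Q \<nu> e = h\<^sup>2 * (r h)\<^sup>2"
        using le by (metis l2norm_sq power2_abs power_mult_distrib)
      have Qk: "Q \<nu> k \<le> 2 * h\<^sup>2 * Q \<nu> d + 2 * Q \<nu> e"
      proof -
        have "Q \<nu> k \<le> (\<integral>x. 2 * h\<^sup>2 * (d x)\<^sup>2 + 2 * (e x)\<^sup>2 \<partial>\<nu>)"
          unfolding Q_def
        proof (rule integral_mono)
          show "integrable \<nu> (\<lambda>x. (k x)\<^sup>2)" using kL2 by (simp add: memL2_def)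
          show "integrable \<nu> (\<lambda>x. 2 * h\<^sup>2 * (d x)\<^sup>2 + 2 * (e x)\<^sup>2)"
            using dL2 eL2 by (auto simp: memL2_def)
          fix x
          have kx: "k x = e x + h * d x" by (simp add: k_def e_def)
          have "0 \<le> (e x - h * d x)\<^sup>2" by simp
          then show "(k x)\<^sup>2 \<le> 2 * h\<^sup>2 * (d x)\<^sup>2 + 2 * (e x)\<^sup>2"
            unfolding kx by (simp add: power2_eq_square algebra_simps)
        qed
        also have "\<dots> = 2 * h\<^sup>2 * Q \<nu> d + 2 * Q \<nu> e"
          using dL2 eL2 by (simp add: memL2_def Q_def)
        finally show ?thesis .
      qed
      have "norm ((F (t + h) - F t) / h - D) = \<bar>F (t + h) - F t - h * D\<bar> / \<bar>h\<bar>"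
        using h0 by (simp add: field_simps)
      also have "\<dots> \<le> (B * l2norm \<nu> e + K * Q \<nu> k) / \<bar>h\<bar>"
        using bd h0 by (intro divide_right_mono) (simp_all add: e_def[abs_def] k_def[abs_def])
      also have "\<dots> \<le> (B * (\<bar>h\<bar> * r h) + K * (2 * h\<^sup>2 * Q \<nu> d + 2 * (h\<^sup>2 * (r h)\<^sup>2))) / \<bar>h\<bar>"
        using Qk K unfolding le Qe by (intro divide_right_mono add_left_mono mult_left_mono) auto
      also have "\<dots> = B * r h + 2 * K * \<bar>h\<bar> * (Q \<nu> d + (r h)\<^sup>2)"
        using h0 by (simp add: field_simps power2_eq_square abs_mult_self_eq)
      finally show ?case .
    qed
  qed
  have lim: "((\<lambda>h. B * r h + 2 * K * \<bar>h\<bar> * (Q \<nu> d + (r h)\<^sup>2)) \<longlongrightarrow> 0) (at 0)"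
  proof -
    have "((\<lambda>h. B * r h + 2 * K * \<bar>h\<bar> * (Q \<nu> d + (r h)\<^sup>2)) \<longlongrightarrow> B * 0 + 2 * K * \<bar>0\<bar> * (Q \<nu> d + 0\<^sup>2)) (at 0)"
      by (intro tendsto_intros r0)
    then show ?thesis by simp
  qed
  have "((\<lambda>h. (F (t + h) - F t) / h - D) \<longlongrightarrow> 0) (at 0)"
    by (rule Lim_null_comparison[OF main lim])
  then show ?thesis unfolding DERIV_def by (simp add: LIM_zero_iff)
qed

lemma abs_contD:
  assumes "abs_cont_L2 \<nu> U a b" "\<epsilon> > 0"
  obtains \<delta> where "\<delta> > 0" "\<And>(n::nat) (s::nat\<Rightarrow>real) (t::nat\<Rightarrow>real). \<forall>i<n. a \<le> s i \<and> s i \<le> t i \<and> t i \<le> b \<Longrightarrow>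
    \<forall>i<n. \<forall>j<n. i \<noteq> j \<longrightarrow> t i \<le> s j \<or> t j \<le> s i \<Longrightarrow>
    (\<Sum>i<n. t i - s i) < \<delta> \<Longrightarrow> (\<Sum>i<n. l2norm \<nu> (\<lambda>x. U (t i) x - U (s i) x)) < \<epsilon>"
proof -
  have "\<exists>\<delta>>0. \<forall>(n::nat) (s::nat\<Rightarrow>real) (t::nat\<Rightarrow>real).
    (\<forall>i<n. a \<le> s i \<and> s i \<le> t i \<and> t i \<le> b) \<and>
    (\<forall>i<n. \<forall>j<n. i \<noteq> j \<longrightarrow> t i \<le> s j \<or> t j \<le> s i) \<and>
    (\<Sum>i<n. t i - s i) < \<delta> \<longrightarrow> (\<Sum>i<n. l2norm \<nu> (\<lambda>x. U (t i) x - U (s i) x)) < \<epsilon>"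
    using assms(1)[unfolded abs_cont_L2_def, THEN spec[of _ \<epsilon>], THEN mp, OF assms(2)] .
  then obtain \<delta> where d: "\<delta> > 0" and H: "\<forall>(n::nat) (s::nat\<Rightarrow>real) (t::nat\<Rightarrow>real).
    (\<forall>i<n. a \<le> s i \<and> s i \<le> t i \<and> t i \<le> b) \<and>
    (\<forall>i<n. \<forall>j<n. i \<noteq> j \<longrightarrow> t i \<le> s j \<or> t j \<le> s i) \<and>
    (\<Sum>i<n. t i - s i) < \<delta> \<longrightarrow> (\<Sum>i<n. l2norm \<nu> (\<lambda>x. U (t i) x - U (s i) x)) < \<epsilon>"
    by (elim exE conjE)
  show ?thesis
  proof (rule that[OF d])
    fix n :: nat and s t :: "nat \<Rightarrow> real"
    assume A: "\<forall>i<n. a \<le> s i \<and> s i \<le> t i \<and> t i \<le> b"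
      and B: "\<forall>i<n. \<forall>j<n. i \<noteq> j \<longrightarrow> t i \<le> s j \<or> t j \<le> s i"
      and C: "(\<Sum>i<n. t i - s i) < \<delta>"
    have "(\<forall>i<n. a \<le> s i \<and> s i \<le> t i \<and> t i \<le> b) \<and>
      (\<forall>i<n. \<forall>j<n. i \<noteq> j \<longrightarrow> t i \<le> s j \<or> t j \<le> s i) \<and> (\<Sum>i<n. t i - s i) < \<delta>"
      using A B C by (intro conjI)
    then show "(\<Sum>i<n. l2norm \<nu> (\<lambda>x. U (t i) x - U (s i) x)) < \<epsilon>"
      using H[THEN spec[of _ n], THEN spec[of _ s], THEN spec[of _ t]] by (rule mp[rotated])
  qed
qed

lemma racf_transfer:
  fixes U :: "real \<Rightarrow> 'a \<Rightarrow> real" and F :: "real \<Rightarrow> real"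
  assumes ac: "abs_cont_L2 \<nu> U a b" and L: "L \<ge> 0" and K: "K \<ge> 0"
    and lip: "\<And>s t. s \<in> {a..b} \<Longrightarrow> t \<in> {a..b} \<Longrightarrow> s \<le> t \<Longrightarrow>
       \<bar>F t - F s\<bar> \<le> L * l2norm \<nu> (\<lambda>x. U t x - U s x) + K * (t - s)"
  shows "racf F a b"
  unfolding racf_def
proof (intro allI impI)
  fix \<epsilon> :: real assume e: "\<epsilon> > 0"
  have e2: "\<epsilon> / (2 * (L + 1)) > 0" using e L by simp
  obtain \<delta> where d: "\<delta> > 0" and H: "\<And>(n::nat) (s::nat\<Rightarrow>real) (t::nat\<Rightarrow>real). \<forall>i<n. a \<le> s i \<and> s i \<le> t i \<and> t i \<le> b \<Longrightarrow>
    \<forall>i<n. \<forall>j<n. i \<noteq> j \<longrightarrow> t i \<le> s j \<or> t j \<le> s i \<Longrightarrow>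
    (\<Sum>i<n. t i - s i) < \<delta> \<Longrightarrow> (\<Sum>i<n. l2norm \<nu> (\<lambda>x. U (t i) x - U (s i) x)) < \<epsilon> / (2 * (L + 1))"
    using abs_contD[OF ac e2] by blast
  define \<delta>' where "\<delta>' = min \<delta> (\<epsilon> / (2 * (K + 1)))"
  have d': "\<delta>' > 0" using d e K by (simp add: \<delta>'_def)
  show "\<exists>\<delta>>0. \<forall>(n::nat) (s::nat\<Rightarrow>real) (t::nat\<Rightarrow>real). (\<forall>i<n. a \<le> s i \<and> s i \<le> t i \<and> t i \<le> b) \<and>
    (\<forall>i<n. \<forall>j<n. i \<noteq> j \<longrightarrow> t i \<le> s j \<or> t j \<le> s i) \<and>
    (\<Sum>i<n. t i - s i) < \<delta> \<longrightarrow> (\<Sum>i<n. \<bar>F (t i) - F (s i)\<bar>) < \<epsilon>"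
  proof (rule exI[of _ \<delta>'], intro conjI d' allI impI)
    fix n :: nat and s t :: "nat \<Rightarrow> real"
    assume A: "(\<forall>i<n. a \<le> s i \<and> s i \<le> t i \<and> t i \<le> b) \<and>
      (\<forall>i<n. \<forall>j<n. i \<noteq> j \<longrightarrow> t i \<le> s j \<or> t j \<le> s i) \<and> (\<Sum>i<n. t i - s i) < \<delta>'"
    have S: "(\<Sum>i<n. t i - s i) < \<delta>" "(\<Sum>i<n. t i - s i) < \<epsilon> / (2 * (K + 1))"
      using A by (auto simp: \<delta>'_def)
    have 1: "(\<Sum>i<n. l2norm \<nu> (\<lambda>x. U (t i) x - U (s i) x)) < \<epsilon> / (2 * (L + 1))"
      by (rule H) (use A S in auto)
    have "(\<Sum>i<n. \<bar>F (t i) - F (s i)\<bar>)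
        \<le> (\<Sum>i<n. L * l2norm \<nu> (\<lambda>x. U (t i) x - U (s i) x) + K * (t i - s i))"
    proof (rule sum_mono)
      fix i assume "i \<in> {..<n}"
      then show "\<bar>F (t i) - F (s i)\<bar> \<le> L * l2norm \<nu> (\<lambda>x. U (t i) x - U (s i) x) + K * (t i - s i)"
        using A by (intro lip) auto
    qed
    also have "\<dots> = L * (\<Sum>i<n. l2norm \<nu> (\<lambda>x. U (t i) x - U (s i) x)) + K * (\<Sum>i<n. t i - s i)"
      by (simp add: sum.distrib sum_distrib_left)
    also have "L * (\<Sum>i<n. l2norm \<nu> (\<lambda>x. U (t i) x - U (s i) x)) \<le> L * (\<epsilon> / (2 * (L + 1)))"
      using 1 L by (intro mult_left_mono) auto
    also have "K * (\<Sum>i<n. t i - s i) \<le> K * (\<epsilon> / (2 * (K + 1)))"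
      using S(2) K by (intro mult_left_mono) auto
    also have "L * (\<epsilon> / (2 * (L + 1))) < \<epsilon>/2"
      using e L by (simp add: field_simps)
    also have "K * (\<epsilon> / (2 * (K + 1))) < \<epsilon>/2"
      using e K by (simp add: field_simps)
    finally show "(\<Sum>i<n. \<bar>F (t i) - F (s i)\<bar>) < \<epsilon>" by simp
  qed
qed


definition hdr :: "real \<Rightarrow> real \<Rightarrow> real" where
  "hdr \<delta> y = (if \<bar>y\<bar> \<le> \<delta> then y / \<delta> else sgn y)"
definition hub :: "real \<Rightarrow> real \<Rightarrow> real" where
  "hub \<delta> y = (if \<bar>y\<bar> \<le> \<delta> then y\<^sup>2 / (2*\<delta>) else \<bar>y\<bar> - \<delta>/2)"

lemma hd_bound: "\<delta> > 0 \<Longrightarrow> \<bar>hdr \<delta> y\<bar> \<le> 1"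
  by (auto simp: hdr_def abs_sgn_eq)

lemma hub_sym: "hub \<delta> (-y) = hub \<delta> y" by (simp add: hub_def)
lemma hd_sym: "hdr \<delta> (-y) = - hdr \<delta> y" by (simp add: hdr_def)

lemma hub_abs0: assumes "\<delta> > 0" shows "hub \<delta> y \<le> \<bar>y\<bar> \<and> \<bar>y\<bar> \<le> hub \<delta> y + \<delta>/2"
  proof (cases "\<bar>y\<bar> \<le> \<delta>")
    case True
    have h: "hub \<delta> y = y\<^sup>2 / (2*\<delta>)" using True by (simp add: hub_def)
    have "y\<^sup>2 = \<bar>y\<bar> * \<bar>y\<bar>" by (simp add: power2_eq_square abs_mult_self_eq)
    also have "\<dots> \<le> \<delta> * \<bar>y\<bar>" using True by (intro mult_right_mono) auto
    finally have 1: "y\<^sup>2 \<le> \<delta> * \<bar>y\<bar>" .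
    have 2: "0 \<le> (\<bar>y\<bar> - \<delta>)\<^sup>2" by simp
    have 3: "(\<bar>y\<bar> - \<delta>)\<^sup>2 = y\<^sup>2 - 2 * \<delta> * \<bar>y\<bar> + \<delta>\<^sup>2" by (simp add: power2_diff)
    have h0: "0 \<le> \<delta> * \<bar>y\<bar>" using assms by simp
    have h00: "\<bar>y\<bar> * (2*\<delta>) = 2 * (\<delta> * \<bar>y\<bar>)" by simp
    have h1: "y\<^sup>2 \<le> \<bar>y\<bar> * (2*\<delta>)" unfolding h00 using 1 h0 by linarith
    have "y\<^sup>2 / (2*\<delta>) \<le> \<bar>y\<bar>" using pos_divide_le_eq[of "2*\<delta>" "y\<^sup>2" "\<bar>y\<bar>"] assms h1 by simp
    moreover have "\<bar>y\<bar> \<le> y\<^sup>2 / (2*\<delta>) + \<delta>/2" using 2 3 assms by (simp add: field_simps power2_eq_square)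
    ultimately show ?thesis using h by simp
  next
    case False
    then show ?thesis using assms by (simp add: hub_def)
  qed

lemma hub_abs: assumes "\<delta> > 0" shows "hub \<delta> y \<le> \<bar>y\<bar>" "\<bar>y\<bar> \<le> hub \<delta> y + \<delta>/2"
  using hub_abs0[OF assms, of y] by auto

lemma sq_le_sq: "0 \<le> (b::real) \<Longrightarrow> b \<le> a \<Longrightarrow> b\<^sup>2 \<le> a\<^sup>2"
  by (rule power_mono) auto

lemma hub_taylor_pos:
  fixes \<delta> y z :: real
  assumes d: "\<delta> > 0" and y: "y \<ge> 0"
  defines "R \<equiv> hub \<delta> z - hub \<delta> y - hdr \<delta> y * (z - y)"
  shows "0 \<le> R \<and> 2 * \<delta> * R \<le> (z - y)\<^sup>2"
proof (cases "y \<le> \<delta>")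
  case yA: True
  have hy: "hub \<delta> y = y\<^sup>2 / (2*\<delta>)" "hdr \<delta> y = y / \<delta>" using yA y by (auto simp: hub_def hdr_def)
  show ?thesis
  proof (cases "\<bar>z\<bar> \<le> \<delta>")
    case True
    have hz: "hub \<delta> z = z\<^sup>2 / (2*\<delta>)" using True by (simp add: hub_def)
    have e: "2 * \<delta> * R = (z - y)\<^sup>2" using d unfolding R_def hz hy by (simp add: field_simps power2_eq_square)
    have "0 \<le> 2 * \<delta> * R" using e by simp
    then have "0 \<le> R" using d by (simp add: zero_le_mult_iff)
    then show ?thesis using e by simp
  next
    case False
    show ?thesis
    proof (cases "z > \<delta>")
      case True
      have hz: "hub \<delta> z = z - \<delta>/2" using True d by (simp add: hub_def)
      have e: "2 * \<delta> * R = (z - y)\<^sup>2 - (z - \<delta>)\<^sup>2" using d unfolding R_def hz hy by (simp add: field_simps power2_eq_square)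
      have "(z - \<delta>)\<^sup>2 \<le> (z - y)\<^sup>2" using True yA by (intro sq_le_sq) auto
      then have "0 \<le> 2 * \<delta> * R" using e by simp
      then have "0 \<le> R" using d by (simp add: zero_le_mult_iff)
      then show ?thesis using e by simp
    next
      case zz: False
      then have zn: "z < -\<delta>" using False by auto
      have hz: "hub \<delta> z = - z - \<delta>/2" using zn d by (simp add: hub_def)
      have e: "2 * \<delta> * R = (z - y)\<^sup>2 - (z + \<delta>)\<^sup>2" using d unfolding R_def hz hy by (simp add: field_simps power2_eq_square)
      have "(-(z + \<delta>))\<^sup>2 \<le> (y - z)\<^sup>2" using zn y d by (intro sq_le_sq) auto
      then have "(z + \<delta>)\<^sup>2 \<le> (z - y)\<^sup>2" by (simp add: power2_commute add.commute)
      then have "0 \<le> 2 * \<delta> * R" using e by simp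
      then have "0 \<le> R" using d by (simp add: zero_le_mult_iff)
      then show ?thesis using e by simp
    qed
  qed
next
  case yB: False
  have hy: "hub \<delta> y = y - \<delta>/2" "hdr \<delta> y = 1" using yB y d by (auto simp: hub_def hdr_def sgn_if)
  show ?thesis
  proof (cases "\<bar>z\<bar> \<le> \<delta>")
    case True
    have hz: "hub \<delta> z = z\<^sup>2 / (2*\<delta>)" using True by (simp add: hub_def)
    have e: "2 * \<delta> * R = (z - \<delta>)\<^sup>2" using d unfolding R_def hz hy by (simp add: field_simps power2_eq_square)
    have "(\<delta> - z)\<^sup>2 \<le> (y - z)\<^sup>2" using True yB by (intro sq_le_sq) auto
    then have "(z - \<delta>)\<^sup>2 \<le> (z - y)\<^sup>2" by (simp add: power2_commute)
    moreover have "0 \<le> 2 * \<delta> * R" using e by simp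
    then have "0 \<le> R" using d by (simp add: zero_le_mult_iff)
    ultimately show ?thesis using e by simp
  next
    case False
    show ?thesis
    proof (cases "z > \<delta>")
      case True
      have hz: "hub \<delta> z = z - \<delta>/2" using True d by (simp add: hub_def)
      have "R = 0" unfolding R_def hz hy by simp
      then show ?thesis by simp
    next
      case zz: False
      then have zn: "z < -\<delta>" using False by auto
      have hz: "hub \<delta> z = - z - \<delta>/2" using zn d by (simp add: hub_def)
      have e: "R = - 2 * z" unfolding R_def hz hy by simp
      have A: "(\<delta> - z)\<^sup>2 \<le> (y - z)\<^sup>2" using zn yB d by (intro sq_le_sq) auto
      have B: "(\<delta> - z)\<^sup>2 = (\<delta> + z)\<^sup>2 - 4 * \<delta> * z" by (simp add: power2_eq_square algebra_simps)
      have C: "0 \<le> (\<delta> + z)\<^sup>2" by simp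
      have "- 4 * \<delta> * z \<le> (y - z)\<^sup>2" using A B C by linarith
      then have "- 4 * \<delta> * z \<le> (z - y)\<^sup>2" by (simp add: power2_commute)
      moreover have "0 \<le> R" using e zn d by simp
      ultimately show ?thesis using e by (simp add: algebra_simps)
    qed
  qed
qed

lemma hub_taylor_gen:
  assumes d: "\<delta> > 0"
  shows "0 \<le> hub \<delta> z - hub \<delta> y - hdr \<delta> y * (z - y) \<and>
         2 * \<delta> * (hub \<delta> z - hub \<delta> y - hdr \<delta> y * (z - y)) \<le> (z - y)\<^sup>2"
proof (cases "y \<ge> 0")
  case True then show ?thesis using hub_taylor_pos[OF d True] by simp
next
  case False
  then have "-y \<ge> 0" by simp
  from hub_taylor_pos[OF d this, of "-z"]
  show ?thesis by (simp add: hub_sym hd_sym power2_commute algebra_simps)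
qed

lemma hub_taylor:
  assumes d: "\<delta> > 0"
  shows "\<bar>hub \<delta> (y + k) - hub \<delta> y - hdr \<delta> y * k\<bar> \<le> k\<^sup>2 / \<delta>"
proof -
  have "0 \<le> hub \<delta> (y + k) - hub \<delta> y - hdr \<delta> y * k \<and> 2 * \<delta> * (hub \<delta> (y + k) - hub \<delta> y - hdr \<delta> y * k) \<le> k\<^sup>2"
    using hub_taylor_gen[OF d, of "y + k" y] by simp
  then have "0 \<le> hub \<delta> (y + k) - hub \<delta> y - hdr \<delta> y * k" "hub \<delta> (y + k) - hub \<delta> y - hdr \<delta> y * k \<le> k\<^sup>2 / (2 * \<delta>)"
    using d by (auto simp: field_simps)
  moreover have "k\<^sup>2 / (2 * \<delta>) \<le> k\<^sup>2 / \<delta>" using d by (simp add: field_simps)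
  ultimately show ?thesis by simp
qed

lemma hub_lip:
  assumes d: "\<delta> > 0"
  shows "\<bar>hub \<delta> a - hub \<delta> b\<bar> \<le> \<bar>a - b\<bar>"
proof -
  have 1: "hdr \<delta> b * (a - b) \<le> hub \<delta> a - hub \<delta> b" using hub_taylor_gen[OF d, of a b] by simp
  have 2: "hdr \<delta> a * (b - a) \<le> hub \<delta> b - hub \<delta> a" using hub_taylor_gen[OF d, of b a] by simp
  have A: "\<bar>hdr \<delta> b\<bar> * \<bar>a - b\<bar> \<le> \<bar>a - b\<bar>" using hd_bound[OF d, of b] by (simp add: mult_left_le_one_le)
  have B: "\<bar>hdr \<delta> a\<bar> * \<bar>a - b\<bar> \<le> \<bar>a - b\<bar>" using hd_bound[OF d, of a] by (simp add: mult_left_le_one_le)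
  have "\<bar>hdr \<delta> b * (a - b)\<bar> \<le> \<bar>a - b\<bar>" "\<bar>hdr \<delta> a * (b - a)\<bar> \<le> \<bar>a - b\<bar>"
    using A B by (simp_all add: abs_mult abs_minus_commute)
  then show ?thesis using 1 2 by (simp add: abs_le_iff)
qed

lemma rho_eq:
  assumes d: "\<delta> > 0"
  shows "y - \<delta> * hdr \<delta> y = (if \<bar>y\<bar> \<le> \<delta> then 0 else if y > \<delta> then y - \<delta> else y + \<delta>)"
  using d by (auto simp: hdr_def sgn_if)

lemma rho_lip:
  assumes d: "\<delta> > 0"
  shows "\<bar>(a - \<delta> * hdr \<delta> a) - (b - \<delta> * hdr \<delta> b)\<bar> \<le> \<bar>a - b\<bar>"
  unfolding rho_eq[OF d] using d by (auto simp: abs_if)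


lemma hdr_meas: "hdr \<delta> \<in> borel_measurable borel"
  unfolding hdr_def[abs_def] by measurable

lemma hub_meas: "hub \<delta> \<in> borel_measurable borel"
  unfolding hub_def[abs_def] by measurable

lemma F1_nonneg: "0 \<le> F1 m \<nu> u" by (simp add: F1_def)

lemma F1_zero: "F1 m \<nu> (\<lambda>x. 0) = 0" by (simp add: F1_def zero_ennreal.rep_eq)

lemma F1_shift: "F1 m \<nu> (\<lambda>x. f x + c) = F1 m \<nu> f" by (simp add: F1_def)

lemma F1_mono:
  assumes "\<And>x y. \<bar>f y - f x\<bar> \<le> \<bar>g y - g x\<bar>"
  shows "F1 m \<nu> f \<le> F1 m \<nu> g"
proof -
  have "(\<integral>\<^sup>+ x. (\<integral>\<^sup>+ y. ennreal \<bar>f y - f x\<bar> \<partial>(m x)) \<partial>\<nu>) \<le> (\<integral>\<^sup>+ x. (\<integral>\<^sup>+ y. ennreal \<bar>g y - g x\<bar> \<partial>(m x)) \<partial>\<nu>)"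
    by (intro nn_integral_mono ennreal_leI assms)
  then have "ennreal (1/2) * (\<integral>\<^sup>+ x. (\<integral>\<^sup>+ y. ennreal \<bar>f y - f x\<bar> \<partial>(m x)) \<partial>\<nu>)
      \<le> ennreal (1/2) * (\<integral>\<^sup>+ x. (\<integral>\<^sup>+ y. ennreal \<bar>g y - g x\<bar> \<partial>(m x)) \<partial>\<nu>)"
    by (rule mult_left_mono) simp
  then show ?thesis unfolding F1_def by (simp add: less_eq_ennreal.rep_eq[symmetric])
qed

lemma subdiff_fin:
  assumes "subdiff_L2 \<nu> (F1 m \<nu>) u g"
  obtains r where "F1 m \<nu> u = ereal r" "0 \<le> r"
proof -
  have "F1 m \<nu> u \<noteq> \<infinity>" using assms by (simp add: subdiff_L2_def)
  moreover have "0 \<le> F1 m \<nu> u" by (rule F1_nonneg)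
  ultimately show ?thesis using that by (cases "F1 m \<nu> u") auto
qed

lemma subdiff_test:
  assumes sd: "subdiff_L2 \<nu> (F1 m \<nu>) u g" and w: "memL2 \<nu> w" and le: "F1 m \<nu> w \<le> F1 m \<nu> u"
  shows "(\<integral>x. g x * (w x - u x) \<partial>\<nu>) \<le> 0"
proof -
  obtain r where r: "F1 m \<nu> u = ereal r" using subdiff_fin[OF sd] by blast
  have "F1 m \<nu> u + ereal (\<integral>x. g x * (w x - u x) \<partial>\<nu>) \<le> F1 m \<nu> w"
    using sd w by (simp add: subdiff_L2_def)
  also have "\<dots> \<le> F1 m \<nu> u" by (rule le)
  finally show ?thesis using r by simp
qed

lemma subdiff_zero:
  assumes sd: "subdiff_L2 \<nu> (F1 m \<nu>) u g"
  shows "F1 m \<nu> u \<le> ereal (\<integral>x. g x * u x \<partial>\<nu>)"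
proof -
  obtain r where r: "F1 m \<nu> u = ereal r" using subdiff_fin[OF sd] by blast
  have "F1 m \<nu> u + ereal (\<integral>x. g x * (0 - u x) \<partial>\<nu>) \<le> F1 m \<nu> (\<lambda>x. 0)"
    using sd memL2_zero[of \<nu>] unfolding subdiff_L2_def by blast
  moreover have "(\<integral>x. g x * (0 - u x) \<partial>\<nu>) = - (\<integral>x. g x * u x \<partial>\<nu>)" by simp
  ultimately show ?thesis using r by (simp add: F1_zero)
qed

lemma subdiff_mean:
  assumes fin: "finite_measure \<nu>" and sd: "subdiff_L2 \<nu> (F1 m \<nu>) u g"
  shows "(\<integral>x. g x \<partial>\<nu>) = 0"
proof -
  have uL2: "memL2 \<nu> u" and gL2: "memL2 \<nu> g" using sd by (auto simp: subdiff_L2_def)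
  have 1: "(\<integral>x. g x * ((u x + 1) - u x) \<partial>\<nu>) \<le> 0"
    by (rule subdiff_test[OF sd memL2_add[OF uL2 memL2_const[OF fin]]]) (simp add: F1_shift)
  have 2: "(\<integral>x. g x * ((u x + (-1)) - u x) \<partial>\<nu>) \<le> 0"
    by (rule subdiff_test[OF sd memL2_add[OF uL2 memL2_const[OF fin]]]) (simp only: F1_shift order_refl)
  have "(\<integral>x. g x * ((u x + (-1)) - u x) \<partial>\<nu>) = - (\<integral>x. g x \<partial>\<nu>)" by simp
  then show ?thesis using 1 2 by simp
qed

lemma hdr_comp_meas:
  assumes "u \<in> borel_measurable \<nu>"
  shows "(\<lambda>x. hdr \<delta> (u x - c)) \<in> borel_measurable \<nu>"
  using measurable_compose[OF borel_measurable_diff[OF assms borel_measurable_const] hdr_meas] by simp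

lemma hub_comp_meas:
  assumes "u \<in> borel_measurable \<nu>"
  shows "(\<lambda>x. hub \<delta> (u x - c)) \<in> borel_measurable \<nu>"
  using measurable_compose[OF borel_measurable_diff[OF assms borel_measurable_const] hub_meas] by simp

lemma memL2_hdr:
  assumes "finite_measure \<nu>" "u \<in> borel_measurable \<nu>" "\<delta> > 0"
  shows "memL2 \<nu> (\<lambda>x. hdr \<delta> (u x - c))"
  by (rule memL2_bounded[OF assms(1) hdr_comp_meas[OF assms(2)]]) (rule hd_bound[OF assms(3)])

lemma subdiff_huber:
  assumes fin: "finite_measure \<nu>" and sd: "subdiff_L2 \<nu> (F1 m \<nu>) u g" and d: "\<delta> > 0"
  shows "0 \<le> (\<integral>x. g x * hdr \<delta> (u x - c) \<partial>\<nu>)"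
proof -
  have uL2: "memL2 \<nu> u" and gL2: "memL2 \<nu> g" using sd by (auto simp: subdiff_L2_def)
  have hL2: "memL2 \<nu> (\<lambda>x. hdr \<delta> (u x - c))" by (rule memL2_hdr[OF fin memL2_meas[OF uL2] d])
  define w where "w x = u x + (- \<delta>) * hdr \<delta> (u x - c)" for x
  have wL2: "memL2 \<nu> w" unfolding w_def by (rule memL2_add[OF uL2 memL2_cmult[OF hL2]])
  have "F1 m \<nu> w \<le> F1 m \<nu> u"
  proof (rule F1_mono)
    fix x y
    have "w y - w x = ((u y - c) - \<delta> * hdr \<delta> (u y - c)) - ((u x - c) - \<delta> * hdr \<delta> (u x - c))"
      by (simp add: w_def algebra_simps)
    also have "\<bar>\<dots>\<bar> \<le> \<bar>(u y - c) - (u x - c)\<bar>" by (rule rho_lip[OF d])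
    finally show "\<bar>w y - w x\<bar> \<le> \<bar>u y - u x\<bar>" by simp
  qed
  from subdiff_test[OF sd wL2 this]
  have "(\<integral>x. g x * (w x - u x) \<partial>\<nu>) \<le> 0" .
  moreover have "(\<integral>x. g x * (w x - u x) \<partial>\<nu>) = (- \<delta>) * (\<integral>x. g x * hdr \<delta> (u x - c) \<partial>\<nu>)"
  proof -
    have "(\<integral>x. g x * (w x - u x) \<partial>\<nu>) = (\<integral>x. (- \<delta>) * (g x * hdr \<delta> (u x - c)) \<partial>\<nu>)"
      by (rule Bochner_Integration.integral_cong) (auto simp: w_def algebra_simps)
    also have "\<dots> = (- \<delta>) * (\<integral>x. g x * hdr \<delta> (u x - c) \<partial>\<nu>)" by (rule integral_mult_right_zero)
    finally show ?thesis .
  qed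
  ultimately have "0 \<le> \<delta> * (\<integral>x. g x * hdr \<delta> (u x - c) \<partial>\<nu>)" by simp
  then show ?thesis using d by (simp add: zero_le_mult_iff)
qed


lemma int_diff_L2:
  assumes "finite_measure \<nu>" "memL2 \<nu> f" "memL2 \<nu> g"
  shows "(\<integral>x. f x \<partial>\<nu>) - (\<integral>x. g x \<partial>\<nu>) = (\<integral>x. f x - g x \<partial>\<nu>)"
  using assms by (simp add: memL2_integrable)

lemma abs_int_le_l2:
  assumes "finite_measure \<nu>" "memL2 \<nu> f"
  shows "\<bar>\<integral>x. f x \<partial>\<nu>\<bar> \<le> sqrt (measure \<nu> (space \<nu>)) * l2norm \<nu> f"
  using integral_abs_bound[of \<nu> f] l1_le_l2[OF assms] by linarith

lemma ev_near:
  fixes t :: real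
  assumes "0 < t"
  shows "\<forall>\<^sub>F h in at 0. 0 \<le> t + h"
proof -
  have "\<forall>\<^sub>F h in at (0::real). h \<in> ball 0 t" using assms by (intro eventually_at_in_open') auto
  then show ?thesis by eventually_elim (auto simp: dist_real_def)
qed

lemma mono_from_L2:
  fixes U :: "real \<Rightarrow> 'a \<Rightarrow> real" and F :: "real \<Rightarrow> real"
  assumes ac: "abs_cont_L2 \<nu> U a b" and ab: "a < b" and N: "negligible N"
    and L: "L \<ge> 0" and K: "K \<ge> 0"
    and lip: "\<And>s t. a \<le> s \<Longrightarrow> s \<le> t \<Longrightarrow> t \<le> b \<Longrightarrow>
       \<bar>F t - F s\<bar> \<le> L * l2norm \<nu> (\<lambda>x. U t x - U s x) + K * (t - s)"
    and der: "\<And>r. a < r \<Longrightarrow> r \<le> b \<Longrightarrow> r \<notin> N \<Longrightarrow> \<exists>D\<le>0. (F has_real_derivative D) (at r)"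
  shows "F b \<le> F a"
proof (rule ac_mono[of a b F N])
  show "a \<le> b" using ab by simp
  show "racf F a b" by (rule racf_transfer[OF ac L K]) (auto intro: lip)
  show "negligible N" by fact
  show "\<And>t. t \<in> {a<..b} \<Longrightarrow> t \<notin> N \<Longrightarrow> \<exists>D\<le>0. (F has_real_derivative D) (at t)"
    using der by auto
qed

lemma l2norm_diff_cont:
  assumes "memL2 \<nu> f" "memL2 \<nu> g"
  shows "\<bar>l2norm \<nu> f - l2norm \<nu> g\<bar> \<le> l2norm \<nu> (\<lambda>x. f x - g x)"
proof -
  have 1: "l2norm \<nu> f \<le> l2norm \<nu> g + l2norm \<nu> (\<lambda>x. f x - g x)"
    using minkowski_L2[OF assms(2) memL2_diff[OF assms]] by simp
  have 2: "l2norm \<nu> g \<le> l2norm \<nu> f + l2norm \<nu> (\<lambda>x. g x - f x)"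
    using minkowski_L2[OF assms(1) memL2_diff[OF assms(2,1)]] by simp
  have "l2norm \<nu> (\<lambda>x. g x - f x) = l2norm \<nu> (\<lambda>x. f x - g x)"
    using l2norm_cmult[of \<nu> "-1" "\<lambda>x. f x - g x"] by simp
  then show ?thesis using 1 2 by linarith
qed

lemma Q_diff_bound:
  assumes "memL2 \<nu> f" "memL2 \<nu> g"
  shows "\<bar>Q \<nu> f - Q \<nu> g\<bar> \<le> l2norm \<nu> (\<lambda>x. f x - g x) * (l2norm \<nu> f + l2norm \<nu> g)"
proof -
  have ff: "integrable \<nu> (\<lambda>x. (f x)\<^sup>2)" and gg: "integrable \<nu> (\<lambda>x. (g x)\<^sup>2)"
    using assms by (auto simp: memL2_def)
  have "Q \<nu> f - Q \<nu> g = (\<integral>x. (f x - g x) * (f x + g x) \<partial>\<nu>)"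
  proof -
    have "Q \<nu> f - Q \<nu> g = (\<integral>x. (f x)\<^sup>2 - (g x)\<^sup>2 \<partial>\<nu>)" using ff gg by (simp add: Q_def)
    also have "\<dots> = (\<integral>x. (f x - g x) * (f x + g x) \<partial>\<nu>)"
      by (rule Bochner_Integration.integral_cong) (auto simp: power2_eq_square algebra_simps)
    finally show ?thesis .
  qed
  also have "\<bar>\<dots>\<bar> \<le> l2norm \<nu> (\<lambda>x. f x - g x) * l2norm \<nu> (\<lambda>x. f x + g x)"
    by (rule cauchy_schwarz_L2[OF memL2_diff[OF assms] memL2_add[OF assms]])
  also have "\<dots> \<le> l2norm \<nu> (\<lambda>x. f x - g x) * (l2norm \<nu> f + l2norm \<nu> g)"
    by (intro mult_left_mono minkowski_L2[OF assms] l2norm_nonneg)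
  finally show ?thesis .
qed

lemma cont_l2norm:
  assumes L2: "\<forall>t\<ge>0. memL2 \<nu> (U t)"
    and cont: "\<forall>t\<ge>0. ((\<lambda>s. l2norm \<nu> (\<lambda>x. U s x - U t x)) \<longlongrightarrow> 0) (at t within {0..})"
    and t: "t \<ge> 0"
  shows "((\<lambda>s. l2norm \<nu> (U s)) \<longlongrightarrow> l2norm \<nu> (U t)) (at t within {0..})"
proof -
  have ev: "\<forall>\<^sub>F s in at t within {0..}. norm (l2norm \<nu> (U s) - l2norm \<nu> (U t)) \<le> l2norm \<nu> (\<lambda>x. U s x - U t x)"
    unfolding eventually_at_filter
  proof (rule always_eventually, intro allI impI)
    fix s assume "s \<noteq> t" "s \<in> {0..}"
    then show "norm (l2norm \<nu> (U s) - l2norm \<nu> (U t)) \<le> l2norm \<nu> (\<lambda>x. U s x - U t x)"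
      using l2norm_diff_cont[of \<nu> "U s" "U t"] L2 t by simp
  qed
  have "((\<lambda>s. l2norm \<nu> (U s) - l2norm \<nu> (U t)) \<longlongrightarrow> 0) (at t within {0..})"
    by (rule Lim_null_comparison[OF ev]) (use cont t in auto)
  then show ?thesis by (simp add: LIM_zero_iff)
qed

lemma le_by_eps:
  fixes x y K :: real
  assumes "K \<ge> 0" "\<And>\<delta>. \<delta> > 0 \<Longrightarrow> x \<le> y + \<delta> * K"
  shows "x \<le> y"
proof (rule ccontr)
  assume "\<not> x \<le> y"
  then have xy: "x - y > 0" by simp
  define \<delta> where "\<delta> = (x - y) / (2 * (K + 1))"
  have d: "\<delta> > 0" using xy assms(1) by (simp add: \<delta>_def)
  have "\<delta> * K < x - y"
  proof -
    have "\<delta> * K \<le> \<delta> * (K + 1)" using d by simp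
    also have "\<dots> = (x - y)/2"
    proof -
      have "K + 1 > 0" using assms(1) by simp
      then show ?thesis by (simp add: \<delta>_def field_simps)
    qed
    finally show ?thesis using xy by simp
  qed
  then show False using assms(2)[OF d] by simp
qed


lemma mass_const:
  fixes U Ut :: "real \<Rightarrow> 'a \<Rightarrow> real"
  assumes fin: "finite_measure \<nu>" and L2: "\<forall>t\<ge>0. memL2 \<nu> (U t)"
    and cont: "\<forall>t\<ge>0. ((\<lambda>s. l2norm \<nu> (\<lambda>x. U s x - U t x)) \<longlongrightarrow> 0) (at t within {0..})"
    and ac: "\<forall>a b. 0 < a \<and> a < b \<longrightarrow> abs_cont_L2 \<nu> U a b"
    and N: "negligible N"
    and der: "\<forall>t. 0 < t \<longrightarrow> t \<notin> N \<longrightarrow> has_L2_derivative \<nu> U t (Ut t)"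
    and zero: "\<forall>t. 0 < t \<longrightarrow> t \<notin> N \<longrightarrow> (\<integral>x. Ut t x \<partial>\<nu>) = 0"
    and t: "0 < t"
  shows "(\<integral>x. U t x \<partial>\<nu>) = (\<integral>x. U 0 x \<partial>\<nu>)"
proof -
  define M where "M s = (\<integral>x. U s x \<partial>\<nu>)" for s
  define S where "S = sqrt (measure \<nu> (space \<nu>))"
  have S0: "S \<ge> 0" by (simp add: S_def)
  have Mlip: "\<bar>M t' - M s'\<bar> \<le> S * l2norm \<nu> (\<lambda>x. U t' x - U s' x)" if "0 \<le> s'" "0 \<le> t'" for s' t'
  proof -
    have "M t' - M s' = (\<integral>x. U t' x - U s' x \<partial>\<nu>)"
      unfolding M_def using int_diff_L2[OF fin] L2 that by auto
    also have "\<bar>\<dots>\<bar> \<le> S * l2norm \<nu> (\<lambda>x. U t' x - U s' x)"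
      unfolding S_def using abs_int_le_l2[OF fin memL2_diff] L2 that by auto
    finally show ?thesis .
  qed
  have Mder: "(M has_real_derivative 0) (at r)" if r: "0 < r" "r \<notin> N" for r
  proof -
    have dr: "has_L2_derivative \<nu> U r (Ut r)" using der r by auto
    have dL2: "memL2 \<nu> (Ut r)" using dr by (simp add: has_L2_derivative_def)
    have Ur: "memL2 \<nu> (U r)" using L2 r by auto
    have "(M has_real_derivative (\<integral>x. Ut r x \<partial>\<nu>)) (at r)"
    proof (rule deriv_lemma[OF dr _ Ur _ S0 order_refl])
      show "\<forall>\<^sub>F h in at 0. memL2 \<nu> (U (r + h))"
        using ev_near[OF r(1)] by eventually_elim (use L2 in auto)
      show "\<forall>\<^sub>F h in at 0. \<bar>M (r + h) - M r - h * (\<integral>x. Ut r x \<partial>\<nu>)\<bar> \<le>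
          S * l2norm \<nu> (\<lambda>x. U (r + h) x - U r x - h * Ut r x) + 0 * Q \<nu> (\<lambda>x. U (r + h) x - U r x)"
        using ev_near[OF r(1)]
      proof eventually_elim
        case (elim h)
        have Uh: "memL2 \<nu> (U (r + h))" using L2 elim by auto
        have hd: "memL2 \<nu> (\<lambda>x. h * Ut r x)" by (rule memL2_cmult[OF dL2])
        have "M (r + h) - M r - h * (\<integral>x. Ut r x \<partial>\<nu>) = (\<integral>x. U (r + h) x - U r x - h * Ut r x \<partial>\<nu>)"
        proof -
          have "M (r + h) - M r = (\<integral>x. U (r + h) x - U r x \<partial>\<nu>)"
            unfolding M_def by (rule int_diff_L2[OF fin Uh Ur])
          moreover have "h * (\<integral>x. Ut r x \<partial>\<nu>) = (\<integral>x. h * Ut r x \<partial>\<nu>)" by simp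
          moreover have "(\<integral>x. U (r + h) x - U r x \<partial>\<nu>) - (\<integral>x. h * Ut r x \<partial>\<nu>) = (\<integral>x. U (r + h) x - U r x - h * Ut r x \<partial>\<nu>)"
            by (rule int_diff_L2[OF fin memL2_diff[OF Uh Ur] hd])
          ultimately show ?thesis by simp
        qed
        also have "\<bar>\<dots>\<bar> \<le> S * l2norm \<nu> (\<lambda>x. U (r + h) x - U r x - h * Ut r x)"
          unfolding S_def by (rule abs_int_le_l2[OF fin memL2_diff[OF memL2_diff[OF Uh Ur] hd]])
        finally show ?case by simp
      qed
    qed
    then show ?thesis using zero r by simp
  qed
  have eqab: "M b = M a" if ab: "0 < a" "a < b" for a b
  proof -
    have acab: "abs_cont_L2 \<nu> U a b" using ac ab by auto
    have 1: "M b \<le> M a"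
    proof (rule mono_from_L2[OF acab ab(2) N S0 order_refl])
      show "\<bar>M t' - M s'\<bar> \<le> S * l2norm \<nu> (\<lambda>x. U t' x - U s' x) + 0 * (t' - s')"
        if "a \<le> s'" "s' \<le> t'" "t' \<le> b" for s' t' using Mlip that ab by simp
      show "\<exists>D\<le>0. (M has_real_derivative D) (at r)" if "a < r" "r \<le> b" "r \<notin> N" for r
        using Mder[of r] that ab by auto
    qed
    have 2: "(\<lambda>s. - M s) b \<le> (\<lambda>s. - M s) a"
    proof (rule mono_from_L2[OF acab ab(2) N S0 order_refl])
      show "\<bar>(\<lambda>s. - M s) t' - (\<lambda>s. - M s) s'\<bar> \<le> S * l2norm \<nu> (\<lambda>x. U t' x - U s' x) + 0 * (t' - s')"
        if "a \<le> s'" "s' \<le> t'" "t' \<le> b" for s' t' using Mlip[of s' t'] that ab by simp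
      show "\<exists>D\<le>0. ((\<lambda>s. - M s) has_real_derivative D) (at r)" if "a < r" "r \<le> b" "r \<notin> N" for r
        using DERIV_minus[OF Mder[of r]] that ab by auto
    qed
    show ?thesis using 1 2 by simp
  qed
  have lim0: "(M \<longlongrightarrow> M 0) (at_right 0)"
  proof -
    have c0: "((\<lambda>s. l2norm \<nu> (\<lambda>x. U s x - U 0 x)) \<longlongrightarrow> 0) (at_right 0)"
      using cont by (auto simp: at_within_Ici_at_right)
    have ev: "\<forall>\<^sub>F s in at_right 0. norm (M s - M 0) \<le> S * l2norm \<nu> (\<lambda>x. U s x - U 0 x)"
      using eventually_at_right_less[of "0::real"] by eventually_elim (use Mlip in auto)
    have "((\<lambda>s. S * l2norm \<nu> (\<lambda>x. U s x - U 0 x)) \<longlongrightarrow> S * 0) (at_right 0)"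
      by (intro tendsto_intros c0)
    then have "((\<lambda>s. M s - M 0) \<longlongrightarrow> 0) (at_right 0)"
      using Lim_null_comparison[OF ev] by simp
    then show ?thesis by (simp add: LIM_zero_iff)
  qed
  have "\<forall>\<^sub>F s in at_right 0. s < t"
    using order_tendstoD(2)[OF tendsto_ident_at t] .
  then have "\<forall>\<^sub>F s in at_right 0. M s = M t"
    using eventually_at_right_less[of "0::real"] by eventually_elim (use eqab in auto)
  then have "(M \<longlongrightarrow> M t) (at_right 0)" by (rule tendsto_eventually)
  then have "M 0 = M t" using lim0 tendsto_unique trivial_limit_at_right_real by blast
  then show ?thesis by (simp add: M_def)
qed


lemma hub_abs_le: "\<delta> > 0 \<Longrightarrow> \<bar>hub \<delta> y\<bar> \<le> \<bar>y\<bar>"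
  using hub_abs(1)[of \<delta> y] by (auto simp: hub_def)

lemma hub_int:
  assumes fin: "finite_measure \<nu>" and f: "memL2 \<nu> f" and d: "\<delta> > 0"
  shows "integrable \<nu> (\<lambda>x. hub \<delta> (f x - c))"
proof (rule Bochner_Integration.integrable_bound)
  show "integrable \<nu> (\<lambda>x. \<bar>f x - c\<bar>)"
    using memL2_integrable[OF fin memL2_diff[OF f memL2_const[OF fin]]] by simp
  show "(\<lambda>x. hub \<delta> (f x - c)) \<in> borel_measurable \<nu>" by (rule hub_comp_meas[OF memL2_meas[OF f]])
  show "AE x in \<nu>. norm (hub \<delta> (f x - c)) \<le> norm \<bar>f x - c\<bar>"
    using hub_abs_le[OF d] by simp
qed

lemma huber_mono:
  fixes U Ut :: "real \<Rightarrow> 'a \<Rightarrow> real"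
  assumes fin: "finite_measure \<nu>" and L2: "\<forall>t\<ge>0. memL2 \<nu> (U t)"
    and ac: "\<forall>a b. 0 < a \<and> a < b \<longrightarrow> abs_cont_L2 \<nu> U a b"
    and N: "negligible N"
    and der: "\<forall>t. 0 < t \<longrightarrow> t \<notin> N \<longrightarrow> has_L2_derivative \<nu> U t (Ut t)"
    and hneg: "\<forall>t. 0 < t \<longrightarrow> t \<notin> N \<longrightarrow> (\<integral>x. hdr \<delta> (U t x - c) * Ut t x \<partial>\<nu>) \<le> 0"
    and d: "\<delta> > 0" and st: "0 < s" "s \<le> t"
  shows "(\<integral>x. hub \<delta> (U t x - c) \<partial>\<nu>) \<le> (\<integral>x. hub \<delta> (U s x - c) \<partial>\<nu>)"
proof (cases "s = t")
  case True then show ?thesis by simp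
next
  case False
  then have st': "s < t" using st by simp
  define P where "P r = (\<integral>x. hub \<delta> (U r x - c) \<partial>\<nu>)" for r
  define S where "S = sqrt (measure \<nu> (space \<nu>))"
  have S0: "S \<ge> 0" by (simp add: S_def)
  have Plip: "\<bar>P t' - P s'\<bar> \<le> S * l2norm \<nu> (\<lambda>x. U t' x - U s' x)" if "0 \<le> s'" "0 \<le> t'" for s' t'
  proof -
    have Us: "memL2 \<nu> (U s')" and Ut': "memL2 \<nu> (U t')" using L2 that by auto
    have it: "integrable \<nu> (\<lambda>x. hub \<delta> (U t' x - c))" by (rule hub_int[OF fin Ut' d])
    have is': "integrable \<nu> (\<lambda>x. hub \<delta> (U s' x - c))" by (rule hub_int[OF fin Us d])
    have idf: "integrable \<nu> (\<lambda>x. \<bar>U t' x - U s' x\<bar>)"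
      using memL2_integrable[OF fin memL2_diff[OF Ut' Us]] by simp
    have "P t' - P s' = (\<integral>x. hub \<delta> (U t' x - c) - hub \<delta> (U s' x - c) \<partial>\<nu>)"
      unfolding P_def using it is' by simp
    also have "\<bar>\<dots>\<bar> \<le> (\<integral>x. \<bar>hub \<delta> (U t' x - c) - hub \<delta> (U s' x - c)\<bar> \<partial>\<nu>)"
      by (rule integral_abs_bound)
    also have "\<dots> \<le> (\<integral>x. \<bar>U t' x - U s' x\<bar> \<partial>\<nu>)"
    proof (rule integral_mono)
      show "integrable \<nu> (\<lambda>x. \<bar>hub \<delta> (U t' x - c) - hub \<delta> (U s' x - c)\<bar>)" using it is' by simp
      show "integrable \<nu> (\<lambda>x. \<bar>U t' x - U s' x\<bar>)" by (rule idf)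
      fix x show "\<bar>hub \<delta> (U t' x - c) - hub \<delta> (U s' x - c)\<bar> \<le> \<bar>U t' x - U s' x\<bar>"
        using hub_lip[OF d, of "U t' x - c" "U s' x - c"] by simp
    qed
    also have "\<dots> \<le> S * l2norm \<nu> (\<lambda>x. U t' x - U s' x)"
      unfolding S_def by (rule l1_le_l2[OF fin memL2_diff[OF Ut' Us]])
    finally show ?thesis .
  qed
  have Pder: "(P has_real_derivative (\<integral>x. hdr \<delta> (U r x - c) * Ut r x \<partial>\<nu>)) (at r)"
    if r: "0 < r" "r \<notin> N" for r
  proof -
    have dr: "has_L2_derivative \<nu> U r (Ut r)" using der r by auto
    have dL2: "memL2 \<nu> (Ut r)" using dr by (simp add: has_L2_derivative_def)
    have Ur: "memL2 \<nu> (U r)" using L2 r by auto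
    have hL2: "memL2 \<nu> (\<lambda>x. hdr \<delta> (U r x - c))" by (rule memL2_hdr[OF fin memL2_meas[OF Ur] d])
    have iD: "integrable \<nu> (\<lambda>x. hdr \<delta> (U r x - c) * Ut r x)" by (rule memL2_mult_int[OF hL2 dL2])
    have K0: "1/\<delta> \<ge> 0" using d by simp
    show ?thesis
    proof (rule deriv_lemma[OF dr _ Ur _ S0 K0])
      show "\<forall>\<^sub>F h in at 0. memL2 \<nu> (U (r + h))"
        using ev_near[OF r(1)] by eventually_elim (use L2 in auto)
      show "\<forall>\<^sub>F h in at 0. \<bar>P (r + h) - P r - h * (\<integral>x. hdr \<delta> (U r x - c) * Ut r x \<partial>\<nu>)\<bar> \<le>
          S * l2norm \<nu> (\<lambda>x. U (r + h) x - U r x - h * Ut r x) + 1/\<delta> * Q \<nu> (\<lambda>x. U (r + h) x - U r x)"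
        using ev_near[OF r(1)]
      proof eventually_elim
        case (elim h)
        have Uh: "memL2 \<nu> (U (r + h))" using L2 elim by auto
        define k where "k x = U (r + h) x - U r x" for x
        define e where "e x = U (r + h) x - U r x - h * Ut r x" for x
        define T1 where "T1 x = hub \<delta> (U (r + h) x - c) - hub \<delta> (U r x - c) - hdr \<delta> (U r x - c) * k x" for x
        define T2 where "T2 x = hdr \<delta> (U r x - c) * e x" for x
        have kL2: "memL2 \<nu> k" unfolding k_def by (rule memL2_diff[OF Uh Ur])
        have eL2: "memL2 \<nu> e" unfolding e_def by (rule memL2_diff[OF memL2_diff[OF Uh Ur] memL2_cmult[OF dL2]])
        have ih1: "integrable \<nu> (\<lambda>x. hub \<delta> (U (r + h) x - c))" by (rule hub_int[OF fin Uh d])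
        have ih0: "integrable \<nu> (\<lambda>x. hub \<delta> (U r x - c))" by (rule hub_int[OF fin Ur d])
        have ihk: "integrable \<nu> (\<lambda>x. hdr \<delta> (U r x - c) * k x)" by (rule memL2_mult_int[OF hL2 kL2])
        have iT1: "integrable \<nu> T1" unfolding T1_def[abs_def] using ih1 ih0 ihk by simp
        have iT2: "integrable \<nu> T2" unfolding T2_def[abs_def] by (rule memL2_mult_int[OF hL2 eL2])
        have ik2: "integrable \<nu> (\<lambda>x. (k x)\<^sup>2)" using kL2 by (simp add: memL2_def)
        have iae: "integrable \<nu> (\<lambda>x. \<bar>e x\<bar>)" using memL2_integrable[OF fin eL2] by simp
        have eq: "P (r + h) - P r - h * (\<integral>x. hdr \<delta> (U r x - c) * Ut r x \<partial>\<nu>) = (\<integral>x. T1 x \<partial>\<nu>) + (\<integral>x. T2 x \<partial>\<nu>)"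
        proof -
          have "(\<integral>x. T1 x \<partial>\<nu>) + (\<integral>x. T2 x \<partial>\<nu>) = (\<integral>x. T1 x + T2 x \<partial>\<nu>)" using iT1 iT2 by simp
          also have "\<dots> = (\<integral>x. (hub \<delta> (U (r + h) x - c) - hub \<delta> (U r x - c)) - h * (hdr \<delta> (U r x - c) * Ut r x) \<partial>\<nu>)"
            by (rule Bochner_Integration.integral_cong) (auto simp: T1_def T2_def k_def e_def algebra_simps)
          also have "\<dots> = P (r + h) - P r - h * (\<integral>x. hdr \<delta> (U r x - c) * Ut r x \<partial>\<nu>)"
            unfolding P_def using ih1 ih0 iD by simp
          finally show ?thesis by simp
        qed
        have b1: "\<bar>\<integral>x. T1 x \<partial>\<nu>\<bar> \<le> 1/\<delta> * Q \<nu> k"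
        proof -
          have "\<bar>\<integral>x. T1 x \<partial>\<nu>\<bar> \<le> (\<integral>x. \<bar>T1 x\<bar> \<partial>\<nu>)" by (rule integral_abs_bound)
          also have "\<dots> \<le> (\<integral>x. (k x)\<^sup>2 / \<delta> \<partial>\<nu>)"
          proof (rule integral_mono)
            show "integrable \<nu> (\<lambda>x. \<bar>T1 x\<bar>)" using iT1 by simp
            show "integrable \<nu> (\<lambda>x. (k x)\<^sup>2 / \<delta>)" using ik2 by simp
            fix x
            have eqx: "U (r + h) x - c = (U r x - c) + k x" by (simp add: k_def)
            show "\<bar>T1 x\<bar> \<le> (k x)\<^sup>2 / \<delta>"
              unfolding T1_def eqx by (rule hub_taylor[OF d])
          qed
          also have "\<dots> = 1/\<delta> * Q \<nu> k" by (simp add: Q_def)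
          finally show ?thesis .
        qed
        have b2: "\<bar>\<integral>x. T2 x \<partial>\<nu>\<bar> \<le> S * l2norm \<nu> e"
        proof -
          have "\<bar>\<integral>x. T2 x \<partial>\<nu>\<bar> \<le> (\<integral>x. \<bar>T2 x\<bar> \<partial>\<nu>)" by (rule integral_abs_bound)
          also have "\<dots> \<le> (\<integral>x. \<bar>e x\<bar> \<partial>\<nu>)"
          proof (rule integral_mono)
            show "integrable \<nu> (\<lambda>x. \<bar>T2 x\<bar>)" using iT2 by simp
            show "integrable \<nu> (\<lambda>x. \<bar>e x\<bar>)" by (rule iae)
            fix x
            have "\<bar>hdr \<delta> (U r x - c)\<bar> * \<bar>e x\<bar> \<le> 1 * \<bar>e x\<bar>"
              by (rule mult_right_mono[OF hd_bound[OF d]]) simp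
            then show "\<bar>T2 x\<bar> \<le> \<bar>e x\<bar>" by (simp add: T2_def abs_mult)
          qed
          also have "\<dots> \<le> S * l2norm \<nu> e" unfolding S_def by (rule l1_le_l2[OF fin eL2])
          finally show ?thesis .
        qed
        have "\<bar>P (r + h) - P r - h * (\<integral>x. hdr \<delta> (U r x - c) * Ut r x \<partial>\<nu>)\<bar> \<le> S * l2norm \<nu> e + 1/\<delta> * Q \<nu> k"
          unfolding eq using b1 b2 abs_triangle_ineq[of "\<integral>x. T1 x \<partial>\<nu>" "\<integral>x. T2 x \<partial>\<nu>"] by linarith
        then show ?case by (simp add: e_def[abs_def] k_def[abs_def])
      qed
    qed
  qed
  have acst: "abs_cont_L2 \<nu> U s t" using ac st st' by auto
  have "P t \<le> P s"
  proof (rule mono_from_L2[OF acst st' N S0 order_refl])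
    show "\<bar>P t' - P s'\<bar> \<le> S * l2norm \<nu> (\<lambda>x. U t' x - U s' x) + 0 * (t' - s')"
      if "s \<le> s'" "s' \<le> t'" "t' \<le> t" for s' t' using Plip that st by simp
    show "\<exists>D\<le>0. (P has_real_derivative D) (at r)" if "s < r" "r \<le> t" "r \<notin> N" for r
    proof -
      have r0: "0 < r" using that st by simp
      show ?thesis using Pder[OF r0 that(3)] hneg r0 that(3) by blast
    qed
  qed
  then show ?thesis by (simp add: P_def)
qed

lemma L1_mono:
  fixes U Ut :: "real \<Rightarrow> 'a \<Rightarrow> real"
  assumes fin: "finite_measure \<nu>" and L2: "\<forall>t\<ge>0. memL2 \<nu> (U t)"
    and ac: "\<forall>a b. 0 < a \<and> a < b \<longrightarrow> abs_cont_L2 \<nu> U a b"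
    and N: "negligible N"
    and der: "\<forall>t. 0 < t \<longrightarrow> t \<notin> N \<longrightarrow> has_L2_derivative \<nu> U t (Ut t)"
    and hneg: "\<forall>\<delta>>0. \<forall>t. 0 < t \<longrightarrow> t \<notin> N \<longrightarrow> (\<integral>x. hdr \<delta> (U t x - c) * Ut t x \<partial>\<nu>) \<le> 0"
    and st: "0 < s" "s \<le> t"
  shows "(\<integral>x. \<bar>U t x - c\<bar> \<partial>\<nu>) \<le> (\<integral>x. \<bar>U s x - c\<bar> \<partial>\<nu>)"
proof (rule le_by_eps)
  define m where "m = measure \<nu> (space \<nu>)"
  show "m / 2 \<ge> 0" by (simp add: m_def)
  fix \<delta> :: real assume d: "\<delta> > 0"
  have Ut': "memL2 \<nu> (U t)" and Us: "memL2 \<nu> (U s)" using L2 st by auto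
  have at: "integrable \<nu> (\<lambda>x. \<bar>U t x - c\<bar>)"
    using memL2_integrable[OF fin memL2_diff[OF Ut' memL2_const[OF fin]]] by simp
  have as: "integrable \<nu> (\<lambda>x. \<bar>U s x - c\<bar>)"
    using memL2_integrable[OF fin memL2_diff[OF Us memL2_const[OF fin]]] by simp
  have ht: "integrable \<nu> (\<lambda>x. hub \<delta> (U t x - c))" by (rule hub_int[OF fin Ut' d])
  have hs: "integrable \<nu> (\<lambda>x. hub \<delta> (U s x - c))" by (rule hub_int[OF fin Us d])
  have "(\<integral>x. \<bar>U t x - c\<bar> \<partial>\<nu>) \<le> (\<integral>x. hub \<delta> (U t x - c) + \<delta>/2 \<partial>\<nu>)"
    by (rule integral_mono[OF at]) (use ht fin hub_abs(2)[OF d] in \<open>auto simp: finite_measure.integrable_const\<close>)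
  also have "\<dots> = (\<integral>x. hub \<delta> (U t x - c) \<partial>\<nu>) + \<delta> * (m / 2)"
    using ht fin by (simp add: finite_measure.integrable_const m_def)
  also have "(\<integral>x. hub \<delta> (U t x - c) \<partial>\<nu>) \<le> (\<integral>x. hub \<delta> (U s x - c) \<partial>\<nu>)"
    by (rule huber_mono[OF fin L2 ac N der _ d st]) (use hneg d in auto)
  also have "(\<integral>x. hub \<delta> (U s x - c) \<partial>\<nu>) \<le> (\<integral>x. \<bar>U s x - c\<bar> \<partial>\<nu>)"
    by (rule integral_mono[OF hs as]) (use hub_abs(1)[OF d] in auto)
  finally show "(\<integral>x. \<bar>U t x - c\<bar> \<partial>\<nu>) \<le> (\<integral>x. \<bar>U s x - c\<bar> \<partial>\<nu>) + \<delta> * (m / 2)" by simp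
qed


lemma energy:
  fixes U Ut :: "real \<Rightarrow> 'a \<Rightarrow> real"
  assumes fin: "finite_measure \<nu>" and L2: "\<forall>t\<ge>0. memL2 \<nu> (U t)"
    and cont: "\<forall>t\<ge>0. ((\<lambda>s. l2norm \<nu> (\<lambda>x. U s x - U t x)) \<longlongrightarrow> 0) (at t within {0..})"
    and ac: "\<forall>a b. 0 < a \<and> a < b \<longrightarrow> abs_cont_L2 \<nu> U a b"
    and N: "negligible N"
    and der: "\<forall>t. 0 < t \<longrightarrow> t \<notin> N \<longrightarrow> has_L2_derivative \<nu> U t (Ut t)"
    and t: "0 < t" and C: "C \<ge> 0"
    and hC: "\<forall>r. 0 < r \<longrightarrow> r \<le> t \<longrightarrow> r \<notin> N \<longrightarrow> C \<le> - (\<integral>x. U r x * Ut r x \<partial>\<nu>)"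
  shows "t * C \<le> Q \<nu> (U 0) / 2"
proof -
  define P where "P r = Q \<nu> (U r) / 2 + r * C" for r
  have step: "P t \<le> P a" if a: "0 < a" "a < t" for a
  proof -
    have contn: "continuous_on {a..t} (\<lambda>r. l2norm \<nu> (U r))"
      unfolding continuous_on_eq_continuous_within
    proof
      fix x assume x: "x \<in> {a..t}"
      then have "x \<ge> 0" using a by simp
      then have "((\<lambda>r. l2norm \<nu> (U r)) \<longlongrightarrow> l2norm \<nu> (U x)) (at x within {0..})"
        by (rule cont_l2norm[OF L2 cont])
      then have "((\<lambda>r. l2norm \<nu> (U r)) \<longlongrightarrow> l2norm \<nu> (U x)) (at x within {a..t})"
        by (rule tendsto_within_subset) (use a in auto)
      then show "continuous (at x within {a..t}) (\<lambda>r. l2norm \<nu> (U r))"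
        by (simp add: continuous_within)
    qed
    obtain xm where xm: "xm \<in> {a..t}" "\<forall>y\<in>{a..t}. l2norm \<nu> (U y) \<le> l2norm \<nu> (U xm)"
      using continuous_attains_sup[OF compact_Icc _ contn] a by auto
    define R where "R = l2norm \<nu> (U xm)"
    have R0: "R \<ge> 0" by (simp add: R_def l2norm_nonneg)
    have Rb: "l2norm \<nu> (U y) \<le> R" if "y \<in> {a..t}" for y using xm that by (simp add: R_def)
    have acat: "abs_cont_L2 \<nu> U a t" using ac a by auto
    show ?thesis
    proof (rule mono_from_L2[OF acat a(2) N R0 C])
      fix s' t' assume st: "a \<le> s'" "s' \<le> t'" "t' \<le> t"
      have Us: "memL2 \<nu> (U s')" and Ut': "memL2 \<nu> (U t')" using L2 st a by auto
      have e1: "P t' - P s' = (Q \<nu> (U t') - Q \<nu> (U s')) / 2 + C * (t' - s')"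
        by (simp add: P_def field_simps)
      have e2: "C * (t' - s') \<ge> 0" using st C by simp
      have A: "\<bar>P t' - P s'\<bar> \<le> \<bar>Q \<nu> (U t') - Q \<nu> (U s')\<bar> / 2 + C * (t' - s')"
        unfolding e1 using e2 abs_triangle_ineq[of "(Q \<nu> (U t') - Q \<nu> (U s')) / 2" "C * (t' - s')"] by simp
      have B: "\<bar>Q \<nu> (U t') - Q \<nu> (U s')\<bar> \<le> l2norm \<nu> (\<lambda>x. U t' x - U s' x) * (l2norm \<nu> (U t') + l2norm \<nu> (U s'))"
        by (rule Q_diff_bound[OF Ut' Us])
      have "l2norm \<nu> (U t') + l2norm \<nu> (U s') \<le> 2 * R"
        using Rb[of t'] Rb[of s'] st a by simp
      then have Cc: "l2norm \<nu> (\<lambda>x. U t' x - U s' x) * (l2norm \<nu> (U t') + l2norm \<nu> (U s')) \<le> l2norm \<nu> (\<lambda>x. U t' x - U s' x) * (2 * R)"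
        by (rule mult_left_mono) (simp add: l2norm_nonneg)
      have D: "l2norm \<nu> (\<lambda>x. U t' x - U s' x) * (2 * R) = 2 * (R * l2norm \<nu> (\<lambda>x. U t' x - U s' x))" by simp
      show "\<bar>P t' - P s'\<bar> \<le> R * l2norm \<nu> (\<lambda>x. U t' x - U s' x) + C * (t' - s')"
      proof -
        have E: "\<bar>Q \<nu> (U t') - Q \<nu> (U s')\<bar> \<le> 2 * (R * l2norm \<nu> (\<lambda>x. U t' x - U s' x))"
          using order_trans[OF B Cc] unfolding D .
        have F: "\<bar>Q \<nu> (U t') - Q \<nu> (U s')\<bar> / 2 \<le> R * l2norm \<nu> (\<lambda>x. U t' x - U s' x)"
          using E by simp
        note A
        also have "\<bar>Q \<nu> (U t') - Q \<nu> (U s')\<bar> / 2 + C * (t' - s') \<le> R * l2norm \<nu> (\<lambda>x. U t' x - U s' x) + C * (t' - s')"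
          using F by (rule add_right_mono)
        finally show ?thesis .
      qed
    next
      fix r assume r: "a < r" "r \<le> t" "r \<notin> N"
      then have r0: "0 < r" using a by simp
      have dr: "has_L2_derivative \<nu> U r (Ut r)" using der r0 r by auto
      have dL2: "memL2 \<nu> (Ut r)" using dr by (simp add: has_L2_derivative_def)
      have Ur: "memL2 \<nu> (U r)" using L2 r0 by auto
      have iD: "integrable \<nu> (\<lambda>x. U r x * Ut r x)" by (rule memL2_mult_int[OF Ur dL2])
      have "(P has_real_derivative ((\<integral>x. U r x * Ut r x \<partial>\<nu>) + C)) (at r)"
      proof (rule deriv_lemma[OF dr _ Ur _ l2norm_nonneg[of \<nu> "U r"], of _ _ "1/2"])
        show "\<forall>\<^sub>F h in at 0. memL2 \<nu> (U (r + h))"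
          using ev_near[OF r0] by eventually_elim (use L2 in auto)
        show "(0::real) \<le> 1/2" by simp
        show "\<forall>\<^sub>F h in at 0. \<bar>P (r + h) - P r - h * ((\<integral>x. U r x * Ut r x \<partial>\<nu>) + C)\<bar> \<le>
            l2norm \<nu> (U r) * l2norm \<nu> (\<lambda>x. U (r + h) x - U r x - h * Ut r x) + 1/2 * Q \<nu> (\<lambda>x. U (r + h) x - U r x)"
          using ev_near[OF r0]
        proof eventually_elim
          case (elim h)
          have Uh: "memL2 \<nu> (U (r + h))" using L2 elim by auto
          define k where "k x = U (r + h) x - U r x" for x
          define e where "e x = U (r + h) x - U r x - h * Ut r x" for x
          have kL2: "memL2 \<nu> k" unfolding k_def by (rule memL2_diff[OF Uh Ur])
          have eL2: "memL2 \<nu> e" unfolding e_def by (rule memL2_diff[OF memL2_diff[OF Uh Ur] memL2_cmult[OF dL2]])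
          have Qh: "Q \<nu> (U (r + h)) = Q \<nu> (U r) + 2 * (\<integral>x. U r x * k x \<partial>\<nu>) + Q \<nu> k"
          proof -
            have "Q \<nu> (U (r + h)) = Q \<nu> (\<lambda>x. U r x + k x)" by (simp add: k_def Q_def)
            also have "\<dots> = Q \<nu> (U r) + 2 * (\<integral>x. U r x * k x \<partial>\<nu>) + Q \<nu> k" by (rule Q_add[OF Ur kL2])
            finally show ?thesis .
          qed
          have ie: "integrable \<nu> (\<lambda>x. U r x * e x)" by (rule memL2_mult_int[OF Ur eL2])
          have ik: "integrable \<nu> (\<lambda>x. U r x * k x)" by (rule memL2_mult_int[OF Ur kL2])
          have "(\<integral>x. U r x * k x \<partial>\<nu>) - h * (\<integral>x. U r x * Ut r x \<partial>\<nu>) = (\<integral>x. U r x * e x \<partial>\<nu>)"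
          proof -
            have "(\<integral>x. U r x * k x \<partial>\<nu>) - h * (\<integral>x. U r x * Ut r x \<partial>\<nu>) = (\<integral>x. U r x * k x - h * (U r x * Ut r x) \<partial>\<nu>)"
              using ik iD by simp
            also have "\<dots> = (\<integral>x. U r x * e x \<partial>\<nu>)"
              by (rule Bochner_Integration.integral_cong) (auto simp: k_def e_def algebra_simps)
            finally show ?thesis .
          qed
          then have eq: "P (r + h) - P r - h * ((\<integral>x. U r x * Ut r x \<partial>\<nu>) + C) = (\<integral>x. U r x * e x \<partial>\<nu>) + Q \<nu> k / 2"
            unfolding P_def Qh by (simp add: algebra_simps)
          have "\<bar>\<integral>x. U r x * e x \<partial>\<nu>\<bar> \<le> l2norm \<nu> (U r) * l2norm \<nu> e"
            by (rule cauchy_schwarz_L2[OF Ur eL2])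
          moreover have "Q \<nu> k \<ge> 0" by (rule Q_nonneg)
          ultimately have "\<bar>P (r + h) - P r - h * ((\<integral>x. U r x * Ut r x \<partial>\<nu>) + C)\<bar> \<le> l2norm \<nu> (U r) * l2norm \<nu> e + 1/2 * Q \<nu> k"
            unfolding eq by linarith
          then show ?case by (simp add: e_def[abs_def] k_def[abs_def])
        qed
      qed
      moreover have "(\<integral>x. U r x * Ut r x \<partial>\<nu>) + C \<le> 0" using hC r0 r by force
      ultimately show "\<exists>D\<le>0. (P has_real_derivative D) (at r)" by blast
    qed
  qed
  have lim: "(P \<longlongrightarrow> Q \<nu> (U 0) / 2) (at_right 0)"
  proof -
    have "((\<lambda>s. l2norm \<nu> (U s)) \<longlongrightarrow> l2norm \<nu> (U 0)) (at_right 0)"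
      using cont_l2norm[OF L2 cont, of 0] by (simp add: at_within_Ici_at_right)
    then have "((\<lambda>s. (l2norm \<nu> (U s))\<^sup>2 / 2 + s * C) \<longlongrightarrow> (l2norm \<nu> (U 0))\<^sup>2 / 2 + 0 * C) (at_right 0)"
      by (intro tendsto_intros) (auto intro: tendsto_ident_at)
    then show ?thesis by (simp add: P_def[abs_def] l2norm_sq)
  qed
  have ev: "\<forall>\<^sub>F a in at_right 0. P t \<le> P a"
  proof -
    have "\<forall>\<^sub>F s in at_right 0. s < t"
      using order_tendstoD(2)[OF tendsto_ident_at t] .
    then show ?thesis
      using eventually_at_right_less[of "0::real"] by eventually_elim (use step in auto)
  qed
  have "P t \<le> Q \<nu> (U 0) / 2"
    by (rule tendsto_le[OF trivial_limit_at_right_real lim tendsto_const ev])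
  moreover have "t * C \<le> P t" using Q_nonneg[of \<nu> "U t"] by (simp add: P_def)
  ultimately show ?thesis by simp
qed


lemma dens_conv:
  fixes \<mu> f :: "'a \<Rightarrow> real"
  assumes dens: "\<nu>2 = density \<nu>1 (\<lambda>x. ennreal (\<mu> x))"
    and mum: "\<mu> \<in> borel_measurable \<nu>1" and mupos: "\<forall>x\<in>space \<nu>1. 0 \<le> \<mu> x"
    and fm: "f \<in> borel_measurable \<nu>1" and fi: "integrable \<nu>2 f"
  shows "integrable \<nu>1 (\<lambda>x. \<mu> x * f x)" "(\<integral>x. f x \<partial>\<nu>2) = (\<integral>x. \<mu> x * f x \<partial>\<nu>1)"
proof -
  have ae: "AE x in \<nu>1. 0 \<le> \<mu> x" using mupos by (intro AE_I2) auto
  show "integrable \<nu>1 (\<lambda>x. \<mu> x * f x)"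
    using fi integrable_density[OF fm mum ae] dens by simp
  show "(\<integral>x. f x \<partial>\<nu>2) = (\<integral>x. \<mu> x * f x \<partial>\<nu>1)"
    using integral_density[OF fm mum ae] dens by simp
qed

lemma V_split:
  fixes \<mu> V v1 w f :: "'a \<Rightarrow> real"
  assumes fin1: "finite_measure \<nu>1" and fin2: "finite_measure \<nu>2"
    and dens: "\<nu>2 = density \<nu>1 (\<lambda>x. ennreal (\<mu> x))"
    and mum: "\<mu> \<in> borel_measurable \<nu>1" and mupos: "\<forall>x\<in>space \<nu>1. 0 \<le> \<mu> x"
    and v1: "memL2 \<nu>1 v1" and w: "memL2 \<nu>2 w"
    and ae: "AE x in \<nu>1. V x = v1 x - \<mu> x * w x" and VL2: "memL2 \<nu>1 V"
    and f1: "memL2 \<nu>1 f" and f2: "memL2 \<nu>2 f"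
  shows "(\<integral>x. V x * f x \<partial>\<nu>1) = (\<integral>x. v1 x * f x \<partial>\<nu>1) - (\<integral>x. w x * f x \<partial>\<nu>2)"
proof -
  have sets2: "sets \<nu>2 = sets \<nu>1" using dens by simp
  have wfm2: "(\<lambda>x. w x * f x) \<in> borel_measurable \<nu>2"
    using w f2 by (auto simp: memL2_def)
  have wfm: "(\<lambda>x. w x * f x) \<in> borel_measurable \<nu>1"
    using wfm2 measurable_cong_sets[OF sets2 refl] by blast
  have wfi: "integrable \<nu>2 (\<lambda>x. w x * f x)" by (rule memL2_mult_int[OF w f2])
  note dc = dens_conv[OF dens mum mupos wfm wfi]
  have vfi: "integrable \<nu>1 (\<lambda>x. v1 x * f x)" by (rule memL2_mult_int[OF v1 f1])
  have "(\<integral>x. V x * f x \<partial>\<nu>1) = (\<integral>x. v1 x * f x - \<mu> x * (w x * f x) \<partial>\<nu>1)"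
  proof (rule integral_cong_AE)
    show "(\<lambda>x. V x * f x) \<in> borel_measurable \<nu>1" using VL2 f1 by (auto simp: memL2_def)
    show "(\<lambda>x. v1 x * f x - \<mu> x * (w x * f x)) \<in> borel_measurable \<nu>1"
      using vfi dc(1) by (intro borel_measurable_diff) auto
    show "AE x in \<nu>1. V x * f x = v1 x * f x - \<mu> x * (w x * f x)"
      using ae by eventually_elim (simp add: left_diff_distrib)
  qed
  also have "\<dots> = (\<integral>x. v1 x * f x \<partial>\<nu>1) - (\<integral>x. \<mu> x * (w x * f x) \<partial>\<nu>1)"
    using vfi dc(1) by simp
  also have "(\<integral>x. \<mu> x * (w x * f x) \<partial>\<nu>1) = (\<integral>x. w x * f x \<partial>\<nu>2)" using dc(2) by simp
  finally show ?thesis .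
qed

lemma good_point:
  fixes \<mu> V v1 w U :: "'a \<Rightarrow> real"
  assumes fin1: "finite_measure \<nu>1" and fin2: "finite_measure \<nu>2"
    and dens: "\<nu>2 = density \<nu>1 (\<lambda>x. ennreal (\<mu> x))"
    and mum: "\<mu> \<in> borel_measurable \<nu>1" and mupos: "\<forall>x\<in>space \<nu>1. 0 \<le> \<mu> x"
    and sd1: "subdiff_L2 \<nu>1 (F1 m1 \<nu>1) U v1"
    and sd2: "subdiff_L2 \<nu>2 (F1 m2 \<nu>2) U (\<lambda>x. - w x)"
    and ae: "AE x in \<nu>1. V x = v1 x - \<mu> x * w x" and VL2: "memL2 \<nu>1 V"
  shows "(\<integral>x. V x \<partial>\<nu>1) = 0"
    and "F1 m1 \<nu>1 U \<le> ereal (\<integral>x. V x * U x \<partial>\<nu>1)"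
    and "\<And>\<delta> c. \<delta> > 0 \<Longrightarrow> 0 \<le> (\<integral>x. V x * hdr \<delta> (U x - c) \<partial>\<nu>1)"
proof -
  have sets2: "sets \<nu>2 = sets \<nu>1" using dens by simp
  have U1: "memL2 \<nu>1 U" and v1: "memL2 \<nu>1 v1" using sd1 by (auto simp: subdiff_L2_def)
  have U2: "memL2 \<nu>2 U" and nw: "memL2 \<nu>2 (\<lambda>x. - w x)" using sd2 by (auto simp: subdiff_L2_def)
  have w: "memL2 \<nu>2 w" using memL2_uminus[OF nw] by simp
  note split = V_split[OF fin1 fin2 dens mum mupos v1 w ae VL2]
  show "(\<integral>x. V x \<partial>\<nu>1) = 0"
  proof -
    have "(\<integral>x. V x * 1 \<partial>\<nu>1) = (\<integral>x. v1 x * 1 \<partial>\<nu>1) - (\<integral>x. w x * 1 \<partial>\<nu>2)"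
      by (rule split[OF memL2_const[OF fin1] memL2_const[OF fin2]])
    moreover have "(\<integral>x. v1 x \<partial>\<nu>1) = 0" by (rule subdiff_mean[OF fin1 sd1])
    moreover have "(\<integral>x. - w x \<partial>\<nu>2) = 0" by (rule subdiff_mean[OF fin2 sd2])
    ultimately show ?thesis by simp
  qed
  show "F1 m1 \<nu>1 U \<le> ereal (\<integral>x. V x * U x \<partial>\<nu>1)"
  proof -
    have eq: "(\<integral>x. V x * U x \<partial>\<nu>1) = (\<integral>x. v1 x * U x \<partial>\<nu>1) - (\<integral>x. w x * U x \<partial>\<nu>2)"
      by (rule split[OF U1 U2])
    have "F1 m2 \<nu>2 U \<le> ereal (\<integral>x. - w x * U x \<partial>\<nu>2)" by (rule subdiff_zero[OF sd2])
    then have "0 \<le> (\<integral>x. - w x * U x \<partial>\<nu>2)" using F1_nonneg[of m2 \<nu>2 U] by (metis ereal_less_eq(5) order_trans)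
    then have neg: "(\<integral>x. w x * U x \<partial>\<nu>2) \<le> 0" by simp
    have "F1 m1 \<nu>1 U \<le> ereal (\<integral>x. v1 x * U x \<partial>\<nu>1)" by (rule subdiff_zero[OF sd1])
    also have "\<dots> \<le> ereal (\<integral>x. V x * U x \<partial>\<nu>1)" using eq neg by simp
    finally show ?thesis .
  qed
  show "0 \<le> (\<integral>x. V x * hdr \<delta> (U x - c) \<partial>\<nu>1)" if d: "\<delta> > 0" for \<delta> c
  proof -
    have h1: "memL2 \<nu>1 (\<lambda>x. hdr \<delta> (U x - c))" by (rule memL2_hdr[OF fin1 memL2_meas[OF U1] d])
    have h2: "memL2 \<nu>2 (\<lambda>x. hdr \<delta> (U x - c))" by (rule memL2_hdr[OF fin2 memL2_meas[OF U2] d])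
    have eq: "(\<integral>x. V x * hdr \<delta> (U x - c) \<partial>\<nu>1) = (\<integral>x. v1 x * hdr \<delta> (U x - c) \<partial>\<nu>1) - (\<integral>x. w x * hdr \<delta> (U x - c) \<partial>\<nu>2)"
      by (rule split[OF h1 h2])
    have "0 \<le> (\<integral>x. - w x * hdr \<delta> (U x - c) \<partial>\<nu>2)" by (rule subdiff_huber[OF fin2 sd2 d])
    then have neg: "(\<integral>x. w x * hdr \<delta> (U x - c) \<partial>\<nu>2) \<le> 0" by simp
    have "0 \<le> (\<integral>x. v1 x * hdr \<delta> (U x - c) \<partial>\<nu>1)" by (rule subdiff_huber[OF fin1 sd1 d])
    then show ?thesis using eq neg by simp
  qed
qed


theorem mainTheorem10:
  fixes M :: "'a measure" and m1 m2 :: "'a \<Rightarrow> 'a measure" and \<nu>1 \<nu>2 :: "'a measure"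
    and \<mu> :: "'a \<Rightarrow> real" and lam :: real
    and u0 :: "'a \<Rightarrow> real" and u :: "real \<Rightarrow> 'a \<Rightarrow> real"
  assumes rw1: "reversible_rw_space M m1 \<nu>1"
    and rw2: "reversible_rw_space M m2 \<nu>2"
    and ac: "absolutely_continuous \<nu>1 \<nu>2"
    and mu_meas: "\<mu> \<in> borel_measurable M"
    and mu_nonneg: "\<forall>x\<in>space M. 0 \<le> \<mu> x"
    and mu_RN: "\<nu>2 = density \<nu>1 (\<lambda>x. ennreal (\<mu> x))"
    and mu_Linf: "\<exists>C. AE x in \<nu>1. \<bar>\<mu> x\<bar> \<le> C"
    and mu_pos: "AE x in \<nu>1. 0 < \<mu> x"
    and fin: "emeasure \<nu>1 (space \<nu>1) < \<infinity>"
    and lam_pos: "0 < lam"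
    and poincare: "\<forall>v. integrable \<nu>1 v \<longrightarrow>
        ereal (lam * (\<integral>x. \<bar>v x - (\<integral>y. v y \<partial>\<nu>1) / measure \<nu>1 (space \<nu>1)\<bar> \<partial>\<nu>1))
          \<le> F1 m1 \<nu>1 v"
    and u0_L2: "memL2 \<nu>1 u0"
    and sol: "strong_solution \<nu>1 (opA m1 \<nu>1 m2 \<nu>2 \<mu>) u0 u"
  shows "\<forall>t>0. (\<integral>x. \<bar>u t x - (\<integral>y. u0 y \<partial>\<nu>1) / measure \<nu>1 (space \<nu>1)\<bar> \<partial>\<nu>1)
           \<le> 1 / (2 * lam) * ((l2norm \<nu>1 u0)\<^sup>2 / t)"
proof -
  have sets1: "sets \<nu>1 = sets M" using rw1 by (simp add: reversible_rw_space_def rw_space_def)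
  have space1: "space \<nu>1 = space M" using sets1 by (rule sets_eq_imp_space_eq)
  have fin1: "finite_measure \<nu>1" using fin by (intro finite_measureI) simp
  have mum: "\<mu> \<in> borel_measurable \<nu>1" using mu_meas measurable_cong_sets[OF sets1 refl] by blast
  have mupos: "\<forall>x\<in>space \<nu>1. 0 \<le> \<mu> x" using mu_nonneg space1 by simp
  have fin2: "finite_measure \<nu>2"
  proof -
    obtain C where C: "AE x in \<nu>1. \<bar>\<mu> x\<bar> \<le> C" using mu_Linf by blast
    have mum': "(\<lambda>x. ennreal (\<mu> x)) \<in> borel_measurable \<nu>1" using mum by simp
    have "emeasure \<nu>2 (space \<nu>2) = (\<integral>\<^sup>+ x. ennreal (\<mu> x) * indicator (space \<nu>1) x \<partial>\<nu>1)"
      unfolding mu_RN by (simp add: emeasure_density[OF mum'])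
    also have "\<dots> \<le> (\<integral>\<^sup>+ x. ennreal C \<partial>\<nu>1)"
    proof (rule nn_integral_mono_AE)
      show "AE x in \<nu>1. ennreal (\<mu> x) * indicator (space \<nu>1) x \<le> ennreal C"
        using C by eventually_elim (auto simp: indicator_def intro!: ennreal_leI dest: abs_le_D1)
    qed
    also have "\<dots> = ennreal C * emeasure \<nu>1 (space \<nu>1)" by simp
    also have "\<dots> < \<infinity>" using fin by (simp add: ennreal_mult_less_top)
    finally show ?thesis by (intro finite_measureI) simp
  qed
  define c0 where "c0 = (\<integral>y. u0 y \<partial>\<nu>1) / measure \<nu>1 (space \<nu>1)"
  obtain ut where S1: "\<forall>t\<ge>0. memL2 \<nu>1 (u t)"
    and S2: "\<forall>t\<ge>0. ((\<lambda>s. l2norm \<nu>1 (\<lambda>x. u s x - u t x)) \<longlongrightarrow> 0) (at t within {0..})"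
    and S3: "AE x in \<nu>1. u 0 x = u0 x"
    and S4: "\<forall>a b. 0 < a \<and> a < b \<longrightarrow> abs_cont_L2 \<nu>1 u a b"
    and S5: "AE t in lborel. 0 < t \<longrightarrow> has_L2_derivative \<nu>1 u t (ut t) \<and> opA m1 \<nu>1 m2 \<nu>2 \<mu> (u t) (\<lambda>x. - ut t x)"
    using sol unfolding strong_solution_def by blast
  have "AE t in lebesgue. 0 < t \<longrightarrow> has_L2_derivative \<nu>1 u t (ut t) \<and> opA m1 \<nu>1 m2 \<nu>2 \<mu> (u t) (\<lambda>x. - ut t x)"
    using S5 by (rule AE_completion)
  then obtain N where N0: "{t \<in> space lebesgue. \<not> (0 < t \<longrightarrow> has_L2_derivative \<nu>1 u t (ut t) \<and> opA m1 \<nu>1 m2 \<nu>2 \<mu> (u t) (\<lambda>x. - ut t x))} \<subseteq> N"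
      and N1: "emeasure lebesgue N = 0" and N2: "N \<in> sets lebesgue"
    by (rule AE_E)
  have N: "negligible N" using N1 N2 by (simp add: negligible_iff_null_sets null_sets_def)
  have good: "has_L2_derivative \<nu>1 u t (ut t) \<and> opA m1 \<nu>1 m2 \<nu>2 \<mu> (u t) (\<lambda>x. - ut t x)"
    if "0 < t" "t \<notin> N" for t
    using N0 that by auto
  have der: "\<forall>t. 0 < t \<longrightarrow> t \<notin> N \<longrightarrow> has_L2_derivative \<nu>1 u t (ut t)" using good by blast
  have GP: "(\<integral>x. ut t x \<partial>\<nu>1) = 0 \<and> F1 m1 \<nu>1 (u t) \<le> ereal (- (\<integral>x. u t x * ut t x \<partial>\<nu>1)) \<and>
       (\<forall>\<delta> c. \<delta> > 0 \<longrightarrow> (\<integral>x. hdr \<delta> (u t x - c) * ut t x \<partial>\<nu>1) \<le> 0)"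
    if t: "0 < t" "t \<notin> N" for t
  proof -
    have opA: "opA m1 \<nu>1 m2 \<nu>2 \<mu> (u t) (\<lambda>x. - ut t x)" using good[OF t] by blast
    then obtain v1 w where VL2: "memL2 \<nu>1 (\<lambda>x. - ut t x)"
      and D1: "Delta1 m1 \<nu>1 (u t) (\<lambda>x. - v1 x)" and D2: "Delta1 m2 \<nu>2 (u t) w"
      and ae: "AE x in \<nu>1. - ut t x = v1 x - \<mu> x * w x"
      unfolding opA_def by blast
    have sd1: "subdiff_L2 \<nu>1 (F1 m1 \<nu>1) (u t) v1" using D1 by (simp add: Delta1_def)
    have sd2: "subdiff_L2 \<nu>2 (F1 m2 \<nu>2) (u t) (\<lambda>x. - w x)" using D2 by (simp add: Delta1_def)
    note G = good_point[OF fin1 fin2 mu_RN mum mupos sd1 sd2 ae VL2]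
    have g1: "(\<integral>x. ut t x \<partial>\<nu>1) = 0" using G(1) by simp
    have g2: "F1 m1 \<nu>1 (u t) \<le> ereal (- (\<integral>x. u t x * ut t x \<partial>\<nu>1))"
      using G(2) by (simp add: mult.commute)
    have g3: "(\<integral>x. hdr \<delta> (u t x - c) * ut t x \<partial>\<nu>1) \<le> 0" if "\<delta> > 0" for \<delta> c
      using G(3)[OF that, of c] by (simp add: mult.commute)
    show ?thesis using g1 g2 g3 by blast
  qed
  have mass: "(\<integral>x. u t x \<partial>\<nu>1) = (\<integral>x. u0 x \<partial>\<nu>1)" if "0 < t" for t
  proof -
    have "(\<integral>x. u t x \<partial>\<nu>1) = (\<integral>x. u 0 x \<partial>\<nu>1)"
      by (rule mass_const[OF fin1 S1 S2 S4 N der _ that]) (use GP in blast)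
    also have "\<dots> = (\<integral>x. u0 x \<partial>\<nu>1)"
      using S3 S1 u0_L2 by (intro integral_cong_AE) (auto simp: memL2_def)
    finally show ?thesis .
  qed
  define \<phi> where "\<phi> r = (\<integral>x. \<bar>u r x - c0\<bar> \<partial>\<nu>1)" for r
  have phimono: "\<phi> t \<le> \<phi> s" if "0 < s" "s \<le> t" for s t
    unfolding \<phi>_def
    by (rule L1_mono[OF fin1 S1 S4 N der _ that]) (use GP in blast)
  have poinc: "lam * \<phi> r \<le> - (\<integral>x. u r x * ut r x \<partial>\<nu>1)" if r: "0 < r" "r \<notin> N" for r
  proof -
    have "integrable \<nu>1 (u r)" using memL2_integrable[OF fin1] S1 r by auto
    then have "ereal (lam * (\<integral>x. \<bar>u r x - (\<integral>y. u r y \<partial>\<nu>1) / measure \<nu>1 (space \<nu>1)\<bar> \<partial>\<nu>1)) \<le> F1 m1 \<nu>1 (u r)"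
      using poincare by blast
    then have "ereal (lam * \<phi> r) \<le> F1 m1 \<nu>1 (u r)"
      using mass[OF r(1)] by (simp add: \<phi>_def c0_def)
    also have "\<dots> \<le> ereal (- (\<integral>x. u r x * ut r x \<partial>\<nu>1))" using GP[OF r] by blast
    finally show ?thesis by simp
  qed
  show ?thesis
  proof (intro allI impI)
    fix t :: real assume t: "0 < t"
    define C where "C = lam * \<phi> t"
    have C0: "C \<ge> 0" using lam_pos by (simp add: C_def \<phi>_def)
    have "t * C \<le> Q \<nu>1 (u 0) / 2"
    proof (rule energy[OF fin1 S1 S2 S4 N der t C0], intro allI impI)
      fix r assume r: "0 < r" "r \<le> t" "r \<notin> N"
      have "C \<le> lam * \<phi> r" unfolding C_def using phimono[OF r(1,2)] lam_pos by simp
      also have "\<dots> \<le> - (\<integral>x. u r x * ut r x \<partial>\<nu>1)" by (rule poinc[OF r(1,3)])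
      finally show "C \<le> - (\<integral>x. u r x * ut r x \<partial>\<nu>1)" .
    qed
    also have "Q \<nu>1 (u 0) = (l2norm \<nu>1 u0)\<^sup>2"
    proof -
      have "Q \<nu>1 (u 0) = Q \<nu>1 u0"
        unfolding Q_def using S3 S1 u0_L2 by (intro integral_cong_AE) (auto simp: memL2_def)
      then show ?thesis by (simp add: l2norm_sq)
    qed
    finally have key: "t * (lam * \<phi> t) \<le> (l2norm \<nu>1 u0)\<^sup>2 / 2" by (simp add: C_def)
    have tl: "0 < t * lam" using t lam_pos by simp
    have "\<phi> t \<le> ((l2norm \<nu>1 u0)\<^sup>2 / 2) / (t * lam)"
      using key tl by (simp add: pos_le_divide_eq algebra_simps)
    also have "\<dots> = 1 / (2 * lam) * ((l2norm \<nu>1 u0)\<^sup>2 / t)" by (simp add: field_simps)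
    finally show "(\<integral>x. \<bar>u t x - (\<integral>y. u0 y \<partial>\<nu>1) / measure \<nu>1 (space \<nu>1)\<bar> \<partial>\<nu>1)
           \<le> 1 / (2 * lam) * ((l2norm \<nu>1 u0)\<^sup>2 / t)" by (simp add: \<phi>_def c0_def)
  qed
qed


end
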